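(* Let $0<R<1$, $\lambda=1-R$, and let $0<\gamma\le\frac12$ satisfy $h(\gamma)>\lambda$. For $n$ such that $\lambda n$ and $i=\gamma n$ are integers, let $M$ be a uniformly random $\lambda n\times n$ binary matrix and let $C=\{x\in\{0,1\}^n: Mx=0\}$. Then, as $n\to\infty$ (over such $n$): 1. If $\psi(4,\gamma)<\lambda$, there is a constant $c>0$ (independent of $n$) such that with probability tending to $1$, $\frac1n\log_2 N_i(C)\le 2h(\gamma)-2(1-R)-c$ (where $\log_2 0=-\infty$). 2. If $\psi(4,\gamma)>\lambda$, then for every $\delta>0$, with probability tending to $1$, \[ \Big|\frac1n\log_2 N_i(C)-\big(\psi(4,\gamma)+2h(\gamma)-3(1-R)\big)\Big|\le\delta. \]
   Context: $h(t)=t\log_2\frac1t+(1-t)\log_2\frac1{1-t}$ is the binary entropy function. $L_i=\{x\in\{0,1\}^n:|x|=i\}$ is the set of vectors of Hamming weight $i$. For a linear code $C$, $N_i(C)$ is the number of ordered 4-tuples $(u_1,u_2,u_3,u_4)\in(C\cap L_i)^4$ with $u_1+u_2+u_3+u_4=0$ (over $\mathbb F_2$) which are non-trivial, i.e. the $u_j$ are pairwise distinct (equivalently, $u_1+u_2+u_3+u_4=0$ is the only nontrivial linear dependence among them, so they span a space of dimension 3). The function $\psi(4,\gamma)$ is defined by $\psi(4,\gamma)=\lim_{n\to\infty}\frac1n\log_2\big|\{(u_1,\dots,u_4)\in L_{\gamma n}^4: u_1+u_2+u_3+u_4=0\}\big|-2h(\gamma)$ (limit over $n$ with $\gamma n$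 integer). *)

theory Defs
  imports "HOL-Analysis.Analysis"
begin

definition bin_entropy :: "real \<Rightarrow> real" where
  "bin_entropy t = t * log 2 (1 / t) + (1 - t) * log 2 (1 / (1 - t))"

text \<open>Vectors of {0,1}^n are represented by their supports, subsets of {..<n};
  addition over F_2 is symmetric difference, Hamming weight is cardinality.\<close>
definition sdiff :: "nat set \<Rightarrow> nat set \<Rightarrow> nat set" where
  "sdiff A B = (A - B) \<union> (B - A)"

definition layer :: "nat \<Rightarrow> nat \<Rightarrow> nat set set" where
  "layer n i = {x. x \<subseteq> {..<n} \<and> card x = i}"

text \<open>Binary m x n matrices, represented by the set of positions (row, column) carrying a 1.\<close>
definition matrices :: "nat \<Rightarrow> nat \<Rightarrow> (nat \<times> nat) set set" where
  "matrices m n = Pow ({..<m} \<times> {..<n})"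

definition kernel_code :: "nat \<Rightarrow> nat \<Rightarrow> (nat \<times> nat) set \<Rightarrow> nat set set" where
  "kernel_code m n M = {x. x \<subseteq> {..<n} \<and> (\<forall>r<m. even (card {j \<in> x. (r, j) \<in> M}))}"

definition zero_sum_4tuples :: "nat set set \<Rightarrow> (nat set \<times> nat set \<times> nat set \<times> nat set) set" where
  "zero_sum_4tuples S = {(u1, u2, u3, u4). u1 \<in> S \<and> u2 \<in> S \<and> u3 \<in> S \<and> u4 \<in> S \<and>
      sdiff (sdiff u1 u2) (sdiff u3 u4) = {}}"

definition N_count :: "nat \<Rightarrow> nat \<Rightarrow> nat set set \<Rightarrow> nat" where
  "N_count n i C = card {(u1, u2, u3, u4) \<in> zero_sum_4tuples (C \<inter> layer n i).
      u1 \<noteq> u2 \<and> u1 \<noteq> u3 \<and> u1 \<noteq> u4 \<and> u2 \<noteq> u3 \<and> u2 \<noteq> u4 \<and> u3 \<noteq> u4}"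

definition int_mult_filter :: "real \<Rightarrow> nat filter" where
  "int_mult_filter x = inf at_top (principal {n. \<exists>k::nat. real k = x * real n})"

definition psi4 :: "real \<Rightarrow> real" where
  "psi4 \<gamma> = Lim (int_mult_filter \<gamma>)
      (\<lambda>n. log 2 (real (card (zero_sum_4tuples (layer n (nat \<lfloor>\<gamma> * real n\<rfloor>))))) / real n)
    - 2 * bin_entropy \<gamma>"

definition prob_matrix :: "nat \<Rightarrow> nat \<Rightarrow> ((nat \<times> nat) set \<Rightarrow> bool) \<Rightarrow> real" where
  "prob_matrix m n P = real (card {M \<in> matrices m n. P M}) / real (card (matrices m n))"

end

theory Submission
  imports Defs "HOL-Real_Asymp.Real_Asymp"
begin

definition sgnR :: "nat set \<Rightarrow> nat set \<Rightarrow> real" where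
  "sgnR R w = (-1) ^ card (R \<inter> w)"

fun spanl :: "nat set list \<Rightarrow> nat set list" where
  "spanl [] = [{}]"
| "spanl (x # xs) = spanl xs @ map (sdiff x) (spanl xs)"

fun indep :: "nat set list \<Rightarrow> bool" where
  "indep [] = True"
| "indep (x # xs) = (indep xs \<and> x \<notin> set (spanl xs))"

lemma sgnR_sdiff:
  assumes "finite R"
  shows "sgnR R (sdiff a b) = sgnR R a * sgnR R b"
proof -
  have e1: "R \<inter> sdiff a b = (R \<inter> a - b) \<union> (R \<inter> b - a)" by (auto simp: sdiff_def)
  have c1: "card (R \<inter> sdiff a b) = card (R \<inter> a - b) + card (R \<inter> b - a)"
    unfolding e1 by (rule card_Un_disjoint) (use assms in auto)
  have c2: "card (R \<inter> a) = card (R \<inter> a - b) + card (R \<inter> a \<inter> b)"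
  proof -
    have "R \<inter> a = (R \<inter> a - b) \<union> (R \<inter> a \<inter> b)" by auto
    then show ?thesis by (metis card_Un_disjoint Diff_disjoint Int_Diff_disjoint assms finite_Int finite_Diff inf_commute Int_Diff)
  qed
  have c3: "card (R \<inter> b) = card (R \<inter> b - a) + card (R \<inter> a \<inter> b)"
  proof -
    have e: "R \<inter> b = (R \<inter> b - a) \<union> (R \<inter> a \<inter> b)" by auto
    have "card ((R \<inter> b - a) \<union> (R \<inter> a \<inter> b)) = card (R \<inter> b - a) + card (R \<inter> a \<inter> b)"
      by (rule card_Un_disjoint) (use assms in auto)
    then show ?thesis using e by simp
  qed
  show ?thesis unfolding sgnR_def c1 c2 c3
    by (simp add: power_add)
qed

lemma prod_spanl:
  assumes "finite R"
  shows "(\<Prod>x\<leftarrow>xs. 1 + sgnR R x) = (\<Sum>w\<leftarrow>spanl xs. sgnR R w)"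
proof (induction xs)
  case Nil then show ?case by (simp add: sgnR_def)
next
  case (Cons x xs)
  have "(\<Prod>y\<leftarrow>x#xs. 1 + sgnR R y) = (1 + sgnR R x) * (\<Sum>w\<leftarrow>spanl xs. sgnR R w)"
    using Cons by simp
  also have "\<dots> = (\<Sum>w\<leftarrow>spanl xs. sgnR R w) + (\<Sum>w\<leftarrow>spanl xs. sgnR R x * sgnR R w)"
    by (simp add: distrib_right sum_list_const_mult)
  also have "(\<Sum>w\<leftarrow>spanl xs. sgnR R x * sgnR R w) = (\<Sum>w\<leftarrow>spanl xs. sgnR R (sdiff x w))"
    using sgnR_sdiff[OF assms] by simp
  finally show ?case by (simp add: comp_def)
qed

lemma sum_sgnR:
  assumes "finite U" "w \<subseteq> U"
  shows "(\<Sum>R\<in>Pow U. sgnR R w) = (if w = {} then 2 ^ card U else 0)"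
proof -
  define f where "f x = (if x \<in> w then (-1::real) else 1)" for x
  have s: "sgnR R w = prod f R * prod (\<lambda>_. 1) (U - R)" if "R \<subseteq> U" for R
  proof -
    have fin: "finite R" using that assms finite_subset by blast
    have "prod f R = prod f (R \<inter> w) * prod f (R - w)"
      by (metis fin prod.Int_Diff)
    also have "prod f (R \<inter> w) = (-1) ^ card (R \<inter> w)" by (simp add: f_def)
    also have "prod f (R - w) = 1" by (simp add: f_def)
    finally show ?thesis by (simp add: sgnR_def)
  qed
  have "(\<Sum>R\<in>Pow U. sgnR R w) = (\<Sum>R\<in>Pow U. prod f R * prod (\<lambda>_. 1) (U - R))"
    by (rule sum.cong) (auto simp: s)
  also have "\<dots> = (\<Prod>x\<in>U. f x + 1)" by (rule prod_add[symmetric]) (rule assms)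
  finally have *: "(\<Sum>R\<in>Pow U. sgnR R w) = (\<Prod>x\<in>U. f x + 1)" .
  show ?thesis
  proof (cases "w = {}")
    case True then show ?thesis using * by (simp add: f_def)
  next
    case False
    then obtain x where "x \<in> w" by auto
    then have "x \<in> U" "f x + 1 = 0" using assms by (auto simp: f_def)
    then have "(\<Prod>x\<in>U. f x + 1) = 0" using assms(1) by (metis prod_zero_iff)
    then show ?thesis using * False by simp
  qed
qed

lemma spanl_sub: "set xs \<subseteq> Pow U \<Longrightarrow> set (spanl xs) \<subseteq> Pow U"
  by (induction xs) (auto simp: sdiff_def)

lemma prod_indicator:
  "(\<Prod>x\<leftarrow>xs. 1 + sgnR R x) = (if \<forall>x\<in>set xs. even (card (R \<inter> x)) then 2 ^ length xs else 0)"
  by (induction xs) (auto simp: sgnR_def)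

lemma sum_if_empty: "(\<Sum>w\<leftarrow>ws. (if w = {} then c else 0)) = (c::real) * real (length (filter ((=) {}) ws))"
  by (induction ws) (auto simp: algebra_simps)


lemma sum_sum_list_swap: "(\<Sum>R\<in>A. (\<Sum>w\<leftarrow>ws. f R w)) = (\<Sum>w\<leftarrow>ws. (\<Sum>R\<in>A. f R w))"
  by (induction ws) (simp_all add: sum.distrib)

lemma count_even:
  assumes "finite U" "set xs \<subseteq> Pow U"
  shows "real (card {R\<in>Pow U. \<forall>x\<in>set xs. even (card (R \<inter> x))}) * 2 ^ length xs
       = 2 ^ card U * real (length (filter ((=) {}) (spanl xs)))"
proof -
  let ?A = "{R\<in>Pow U. \<forall>x\<in>set xs. even (card (R \<inter> x))}"
  have fin: "finite (Pow U)" using assms by simp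
  have "(\<Sum>R\<in>Pow U. (\<Prod>x\<leftarrow>xs. 1 + sgnR R x))
     = (\<Sum>R\<in>Pow U. (if \<forall>x\<in>set xs. even (card (R \<inter> x)) then 2 ^ length xs else 0))"
    by (simp only: prod_indicator)
  also have "\<dots> = (\<Sum>R\<in>?A. 2 ^ length xs)" by (rule sum.inter_filter[OF fin, symmetric])
  also have "\<dots> = real (card ?A) * 2 ^ length xs" by simp
  finally have "real (card ?A) * 2 ^ length xs = (\<Sum>R\<in>Pow U. (\<Prod>x\<leftarrow>xs. 1 + sgnR R x))" by simp
  also have "\<dots> = (\<Sum>R\<in>Pow U. (\<Sum>w\<leftarrow>spanl xs. sgnR R w))"
  proof (rule sum.cong)
    fix R assume "R \<in> Pow U"
    then have "finite R" using assms(1) by (meson PowD rev_finite_subset)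
    then show "(\<Prod>x\<leftarrow>xs. 1 + sgnR R x) = (\<Sum>w\<leftarrow>spanl xs. sgnR R w)" by (rule prod_spanl)
  qed simp
  also have "\<dots> = (\<Sum>w\<leftarrow>spanl xs. (\<Sum>R\<in>Pow U. sgnR R w))"
    by (rule sum_sum_list_swap)
  also have "\<dots> = (\<Sum>w\<leftarrow>spanl xs. (if w = {} then 2 ^ card U else 0))"
  proof -
    have "\<forall>w\<in>set (spanl xs). (\<Sum>R\<in>Pow U. sgnR R w) = (if w = {} then 2 ^ card U else 0)"
    proof
      fix w assume "w \<in> set (spanl xs)"
      then have "w \<subseteq> U" using spanl_sub[OF assms(2)] by auto
      then show "(\<Sum>R\<in>Pow U. sgnR R w) = (if w = {} then 2 ^ card U else 0)"
        by (rule sum_sgnR[OF assms(1)])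
    qed
    then show ?thesis by (simp cong: map_cong)
  qed
  also have "\<dots> = 2 ^ card U * real (length (filter ((=) {}) (spanl xs)))"
    by (rule sum_if_empty)
  finally show ?thesis .
qed

lemma spanl_length: "length (spanl xs) = 2 ^ length xs"
  by (induction xs) auto

lemma spanl_empty: "{} \<in> set (spanl xs)"
  by (induction xs) auto

lemma spanl_mono: "set (spanl xs) \<subseteq> set (spanl (x # xs))"
  by auto

lemma spanl_self: "x \<in> set (spanl (x # xs))"
proof -
  have "sdiff x {} = x" by (simp add: sdiff_def)
  then have "x \<in> sdiff x ` set (spanl xs)" using spanl_empty[of xs] by (metis image_eqI)
  then show ?thesis by simp
qed

lemma spanl_set: "set xs \<subseteq> set (spanl xs)"
proof (induction xs)
  case Nil then show ?case by simp
next
  case (Cons x xs) then show ?case using spanl_self[of x xs] spanl_mono[of xs x] by auto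
qed

lemma sdiff_empty_iff: "(sdiff x w = {}) = (w = x)"
  by (auto simp: sdiff_def)

lemma indep_zero: "indep xs \<Longrightarrow> length (filter ((=) {}) (spanl xs)) = 1"
proof (induction xs)
  case Nil then show ?case by simp
next
  case (Cons x xs)
  have "filter ((=) {}) (map (sdiff x) (spanl xs)) = []"
  proof -
    have "\<forall>w\<in>set (spanl xs). {} \<noteq> sdiff x w"
      using Cons.prems sdiff_empty_iff[of x] by force
    then show ?thesis by (simp add: filter_empty_conv)
  qed
  then show ?case using Cons by simp
qed

lemma count_indep:
  assumes "finite U" "set xs \<subseteq> Pow U" "indep xs"
  shows "real (card {R\<in>Pow U. \<forall>x\<in>set xs. even (card (R \<inter> x))}) = 2 ^ card U / 2 ^ length xs"
  using count_even[OF assms(1,2)] indep_zero[OF assms(3)] by (simp add: field_simps)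

definition row :: "(nat \<times> nat) set \<Rightarrow> nat \<Rightarrow> nat \<Rightarrow> nat set" where
  "row M n r = {j. (r, j) \<in> M} \<inter> {..<n}"

lemma kernel_row:
  "kernel_code m n M = {x. x \<subseteq> {..<n} \<and> (\<forall>r<m. even (card (row M n r \<inter> x)))}"
proof -
  have "x \<subseteq> {..<n} \<Longrightarrow> {j \<in> x. (r, j) \<in> M} = row M n r \<inter> x" for x r
    by (auto simp: row_def)
  then show ?thesis unfolding kernel_code_def by auto
qed

lemma sgnR_even: "(sgnR R w = 1) = even (card (R \<inter> w))"
  by (simp add: sgnR_def neg_one_even_power neg_one_odd_power split: if_splits)
     (metis neg_one_even_power neg_one_odd_power one_neq_neg_one)

lemma kernel_sdiff:
  assumes "x \<in> kernel_code m n M" "y \<in> kernel_code m n M"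
  shows "sdiff x y \<in> kernel_code m n M"
proof -
  have fin: "finite (row M n r)" for r by (simp add: row_def)
  have "sdiff x y \<subseteq> {..<n}" using assms by (auto simp: kernel_row sdiff_def)
  moreover have "even (card (row M n r \<inter> sdiff x y))" if "r < m" for r
  proof -
    have "sgnR (row M n r) x = 1" "sgnR (row M n r) y = 1"
      using assms that by (auto simp: kernel_row sgnR_even)
    then have "sgnR (row M n r) (sdiff x y) = 1" by (simp add: sgnR_sdiff[OF fin])
    then show ?thesis by (simp add: sgnR_even)
  qed
  ultimately show ?thesis by (simp add: kernel_row)
qed

lemma kernel_empty: "{} \<in> kernel_code m n M"
  by (simp add: kernel_row)

lemma kernel_spanl: "set xs \<subseteq> kernel_code m n M \<Longrightarrow> set (spanl xs) \<subseteq> kernel_code m n M"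
  by (induction xs) (auto simp: kernel_empty kernel_sdiff)

definition cntM :: "nat \<Rightarrow> nat \<Rightarrow> nat set list \<Rightarrow> nat" where
  "cntM m n xs = card {M \<in> matrices m n. \<forall>x\<in>set xs. x \<in> kernel_code m n M}"

lemma cntM_row:
  assumes "set xs \<subseteq> Pow {..<n}"
  shows "cntM m n xs = card {R\<in>Pow {..<n}. \<forall>x\<in>set xs. even (card (R \<inter> x))} ^ m"
proof -
  define A where "A = {R\<in>Pow {..<n}. \<forall>x\<in>set xs. even (card (R \<inter> x))}"
  define S where "S = {M \<in> matrices m n. \<forall>x\<in>set xs. x \<in> kernel_code m n M}"
  define f where "f M = (\<lambda>r\<in>{..<m}. row M n r)" for M
  define g where "g F = {(r, j). r < m \<and> j \<in> F r}" for F :: "nat \<Rightarrow> nat set"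
  have Sr: "S = {M \<in> matrices m n. \<forall>r<m. row M n r \<in> A}"
    using assms unfolding S_def A_def kernel_row by (auto simp: row_def Int_commute)
  have "bij_betw f S (Pi\<^sub>E {..<m} (\<lambda>_. A))"
  proof (rule bij_betw_byWitness[where f'=g])
    show "\<forall>a\<in>S. g (f a) = a"
      unfolding Sr by (auto simp: f_def g_def row_def matrices_def)
    show "\<forall>a'\<in>Pi\<^sub>E {..<m} (\<lambda>_. A). f (g a') = a'"
    proof
      fix F assume F: "F \<in> Pi\<^sub>E {..<m} (\<lambda>_. A)"
      show "f (g F) = F"
      proof (rule ext)
        fix r show "f (g F) r = F r"
          using F by (cases "r < m") (auto simp: f_def g_def row_def A_def PiE_def extensional_def)
      qed
    qed
    show "f ` S \<subseteq> Pi\<^sub>E {..<m} (\<lambda>_. A)" unfolding Sr by (auto simp: f_def)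
    show "g ` Pi\<^sub>E {..<m} (\<lambda>_. A) \<subseteq> S"
    proof
      fix M assume "M \<in> g ` Pi\<^sub>E {..<m} (\<lambda>_. A)"
      then obtain F where F: "F \<in> Pi\<^sub>E {..<m} (\<lambda>_. A)" and M: "M = g F" by auto
      have "row M n r = F r" if "r < m" for r
        using F that unfolding M by (auto simp: g_def row_def A_def PiE_def)
      moreover have "M \<in> matrices m n" using F unfolding M by (auto simp: g_def matrices_def A_def PiE_def)
      ultimately show "M \<in> S" using F unfolding Sr by auto
    qed
  qed
  then have "card S = card (Pi\<^sub>E {..<m} (\<lambda>_. A))" by (rule bij_betw_same_card)
  also have "\<dots> = card A ^ m" by (simp add: card_PiE)
  finally show ?thesis by (simp add: cntM_def S_def A_def)
qed

lemma cntM_indep: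
  assumes "set xs \<subseteq> Pow {..<n}" "indep xs"
  shows "real (cntM m n xs) = (2 ^ n / 2 ^ length xs) ^ m"
  using count_indep[OF _ assms(1,2)] cntM_row[OF assms(1)] by simp

lemma card_matrices: "card (matrices m n) = 2 ^ (m * n)"
  by (simp add: matrices_def card_Pow card_cartesian_product)

lemma cntM_span:
  assumes "set G \<subseteq> set ys" "set ys \<subseteq> set (spanl G)"
  shows "cntM m n ys = cntM m n G"
proof -
  have "(\<forall>x\<in>set ys. x \<in> kernel_code m n M) = (\<forall>x\<in>set G. x \<in> kernel_code m n M)" for M
    using assms kernel_spanl[of G m n M] by blast
  then show ?thesis unfolding cntM_def by simp
qed

definition gr :: "nat set list \<Rightarrow> nat set \<Rightarrow> nat set list" where
  "gr B x = (if x \<in> set (spanl B) then B else x # B)"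

lemma gr_indep: "indep B \<Longrightarrow> indep (gr B x)"
  by (simp add: gr_def)

lemma gr_sub: "set B \<subseteq> Pow U \<Longrightarrow> x \<subseteq> U \<Longrightarrow> set (gr B x) \<subseteq> Pow U"
  by (auto simp: gr_def)

lemma gr_span_mono: "set (spanl B) \<subseteq> set (spanl (gr B x))"
  by (auto simp: gr_def)

lemma gr_span_self: "x \<in> set (spanl (gr B x))"
  using spanl_self[of x B] by (auto simp: gr_def)

lemma gr_set: "set (gr B x) \<subseteq> insert x (set B)"
  by (auto simp: gr_def)

lemma sdiff_assoc: "sdiff (sdiff a b) c = sdiff a (sdiff b c)"
  by (auto simp: sdiff_def)

lemma sdiff_comm: "sdiff a b = sdiff b a"
  by (auto simp: sdiff_def)

lemma sdiff_cancel: "sdiff (sdiff x a) (sdiff x b) = sdiff a b"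
  by (auto simp: sdiff_def)

lemma spanl_closed:
  "w1 \<in> set (spanl G) \<Longrightarrow> w2 \<in> set (spanl G) \<Longrightarrow> sdiff w1 w2 \<in> set (spanl G)"
proof (induction G arbitrary: w1 w2)
  case Nil then show ?case by (simp add: sdiff_def)
next
  case (Cons x G)
  from Cons.prems have A: "w1 \<in> set (spanl G) \<or> (\<exists>v\<in>set (spanl G). w1 = sdiff x v)" by auto
  from Cons.prems have B: "w2 \<in> set (spanl G) \<or> (\<exists>v\<in>set (spanl G). w2 = sdiff x v)" by auto
  show ?case
  proof (cases "w1 \<in> set (spanl G)")
    case T1: True
    show ?thesis
    proof (cases "w2 \<in> set (spanl G)")
      case True then show ?thesis using T1 Cons.IH by simp
    next
      case False
      then obtain v where v: "v \<in> set (spanl G)" "w2 = sdiff x v" using B by auto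
      have "sdiff w1 w2 = sdiff x (sdiff w1 v)" using v by (auto simp: sdiff_def)
      then show ?thesis using Cons.IH[OF T1 v(1)] by simp
    qed
  next
    case F1: False
    then obtain u where u: "u \<in> set (spanl G)" "w1 = sdiff x u" using A by auto
    show ?thesis
    proof (cases "w2 \<in> set (spanl G)")
      case True
      have "sdiff w1 w2 = sdiff x (sdiff u w2)" using u by (auto simp: sdiff_def)
      then show ?thesis using Cons.IH[OF u(1) True] by simp
    next
      case False
      then obtain v where v: "v \<in> set (spanl G)" "w2 = sdiff x v" using B by auto
      have "sdiff w1 w2 = sdiff u v" using u v by (simp add: sdiff_cancel)
      then show ?thesis using Cons.IH[OF u(1) v(1)] by simp
    qed
  qed
qed

definition w0 :: "real \<Rightarrow> nat \<Rightarrow> real" where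
  "w0 P s = (if s < 6 then P ^ s else 0)"

fun W :: "real \<Rightarrow> real \<Rightarrow> nat \<Rightarrow> nat \<Rightarrow> real" where
  "W P l 0 s = w0 P s"
| "W P l (Suc k) s = 2 ^ s * W P l k s + l * W P l k (Suc s)"

fun NS :: "nat set set \<Rightarrow> real \<Rightarrow> nat \<Rightarrow> nat set list \<Rightarrow> real" where
  "NS L P 0 B = w0 P (length B)"
| "NS L P (Suc k) B = (\<Sum>x\<in>L. NS L P k (gr B x))"

lemma W_nonneg: "0 \<le> P \<Longrightarrow> 0 \<le> l \<Longrightarrow> 0 \<le> W P l k s"
  by (induction k arbitrary: s) (auto simp: w0_def)

lemma NS_bound:
  assumes "finite L" "0 \<le> P"
  shows "indep B \<Longrightarrow> NS L P k B \<le> W P (card L) k (length B)"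
proof (induction k arbitrary: B)
  case 0 then show ?case by simp
next
  case (Suc k)
  let ?S = "set (spanl B)"
  let ?s = "length B"
  have "NS L P (Suc k) B = (\<Sum>x\<in>L \<inter> ?S. NS L P k (gr B x)) + (\<Sum>x\<in>L - ?S. NS L P k (gr B x))"
    using assms(1) by (simp add: sum.Int_Diff)
  also have "(\<Sum>x\<in>L \<inter> ?S. NS L P k (gr B x)) = (\<Sum>x\<in>L \<inter> ?S. NS L P k B)"
    by (rule sum.cong) (auto simp: gr_def)
  also have "(\<Sum>x\<in>L - ?S. NS L P k (gr B x)) = (\<Sum>x\<in>L - ?S. NS L P k (x # B))"
    by (rule sum.cong) (auto simp: gr_def)
  also have "(\<Sum>x\<in>L \<inter> ?S. NS L P k B) \<le> (\<Sum>x\<in>L \<inter> ?S. W P (card L) k ?s)"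
    by (rule sum_mono) (use Suc in auto)
  also have "(\<Sum>x\<in>L - ?S. NS L P k (x # B)) \<le> (\<Sum>x\<in>L - ?S. W P (card L) k (Suc ?s))"
  proof (rule sum_mono)
    fix x assume "x \<in> L - ?S"
    then have "indep (x # B)" using Suc.prems by simp
    then show "NS L P k (x # B) \<le> W P (card L) k (Suc ?s)" using Suc.IH by fastforce
  qed
  also have "(\<Sum>x\<in>L \<inter> ?S. W P (card L) k ?s) \<le> 2 ^ ?s * W P (card L) k ?s"
  proof -
    have "card (L \<inter> ?S) \<le> card ?S" by (rule card_mono) auto
    also have "\<dots> \<le> length (spanl B)" by (rule card_length)
    finally have "card (L \<inter> ?S) \<le> 2 ^ ?s" by (simp add: spanl_length)
    then have "real (card (L \<inter> ?S)) \<le> 2 ^ ?s" by (metis of_nat_le_iff of_nat_numeral of_nat_power)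
    then show ?thesis using W_nonneg[OF assms(2), of "card L" k ?s]
      by (simp add: mult_right_mono)
  qed
  also have "(\<Sum>x\<in>L - ?S. W P (card L) k (Suc ?s)) \<le> card L * W P (card L) k (Suc ?s)"
  proof -
    have "card (L - ?S) \<le> card L" using assms(1) by (simp add: card_mono)
    then show ?thesis using W_nonneg[OF assms(2), of "card L" k "Suc ?s"]
      by (simp add: mult_right_mono)
  qed
  finally show ?case by simp
qed

lemma W33: "W P l 3 3 = 512 * P ^ 3 + 448 * l * P ^ 4 + 56 * l^2 * P ^ 5"
  by (simp add: numeral_eq_Suc w0_def algebra_simps power2_eq_square)

definition Tn :: "real \<Rightarrow> nat \<Rightarrow> (nat set \<times> nat set \<times> nat set \<times> nat set) set" where
  "Tn \<gamma> n = zero_sum_4tuples (layer n (nat \<lfloor>\<gamma> * real n\<rfloor>))"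

definition Sg :: "real \<Rightarrow> nat set" where
  "Sg \<gamma> = {n. \<exists>k::nat. real k = \<gamma> * real n}"

lemma Sg_floor: "n \<in> Sg \<gamma> \<Longrightarrow> real (nat \<lfloor>\<gamma> * real n\<rfloor>) = \<gamma> * real n"
proof -
  assume "n \<in> Sg \<gamma>"
  then obtain k :: nat where k: "real k = \<gamma> * real n" unfolding Sg_def by auto
  have "\<lfloor>\<gamma> * real n\<rfloor> = int k" unfolding k[symmetric] by simp
  then show ?thesis using k by simp
qed

lemma Sg_add: "a \<in> Sg \<gamma> \<Longrightarrow> b \<in> Sg \<gamma> \<Longrightarrow> a + b \<in> Sg \<gamma>"
proof -
  assume "a \<in> Sg \<gamma>" "b \<in> Sg \<gamma>"
  then obtain ka kb :: nat where k: "real ka = \<gamma> * real a" "real kb = \<gamma> * real b"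
    unfolding Sg_def by auto
  then have "real (ka + kb) = \<gamma> * real (a + b)" by (simp add: distrib_left)
  then show ?thesis unfolding Sg_def by blast
qed

lemma Sg_zero: "0 \<in> Sg \<gamma>" unfolding Sg_def by (auto intro: exI[of _ 0])

lemma Sg_mult: "a \<in> Sg \<gamma> \<Longrightarrow> k * a \<in> Sg \<gamma>"
  by (induction k) (auto simp: Sg_zero Sg_add)

lemma Sg_diff:
  assumes "a \<in> Sg \<gamma>" "b \<in> Sg \<gamma>" "b \<le> a" "0 \<le> \<gamma>"
  shows "a - b \<in> Sg \<gamma>"
proof -
  obtain ka kb :: nat where k: "real ka = \<gamma> * real a" "real kb = \<gamma> * real b"
    using assms unfolding Sg_def by auto
  have "\<gamma> * real b \<le> \<gamma> * real a" using assms(3,4) by (simp add: mult_left_mono)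
  then have le: "kb \<le> ka" using k by simp
  have "real (a - b) = real a - real b" using assms(3) by simp
  then have "real (ka - kb) = \<gamma> * real (a - b)" using k le by (simp add: algebra_simps)
  then show ?thesis unfolding Sg_def by blast
qed

lemma Sg_char:
  assumes "0 \<le> \<gamma>" "q \<in> Sg \<gamma>" "q > 0" "\<And>n. n \<in> Sg \<gamma> \<Longrightarrow> 0 < n \<Longrightarrow> q \<le> n"
  shows "n \<in> Sg \<gamma> \<longleftrightarrow> q dvd n"
proof
  assume n: "n \<in> Sg \<gamma>"
  have "(n div q) * q \<in> Sg \<gamma>" by (rule Sg_mult[OF assms(2)])
  then have "n - (n div q) * q \<in> Sg \<gamma>" using n assms(1) by (intro Sg_diff) (auto simp: times_div_less_eq_dividend)
  then have "n mod q \<in> Sg \<gamma>" by (simp add: minus_div_mult_eq_mod)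
  moreover have "n mod q < q" using assms(3) by simp
  ultimately have "n mod q = 0" using assms(4) by (meson not_le not_gr0)
  then show "q dvd n" by auto
next
  assume "q dvd n"
  then obtain k where "n = q * k" by (rule dvdE)
  then have "n = k * q" by simp
  then show "n \<in> Sg \<gamma>" using Sg_mult[OF assms(2)] by simp
qed

definition J :: "nat \<Rightarrow> nat set \<Rightarrow> nat set \<Rightarrow> nat set" where
  "J n1 u v = u \<union> {j. n1 \<le> j \<and> j - n1 \<in> v}"

lemma shift_eq: "{j. (n1::nat) \<le> j \<and> j - n1 \<in> v} = (+) n1 ` v"
proof (rule set_eqI)
  fix x show "x \<in> {j. n1 \<le> j \<and> j - n1 \<in> v} \<longleftrightarrow> x \<in> (+) n1 ` v"
  proof
    assume "x \<in> {j. n1 \<le> j \<and> j - n1 \<in> v}"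
    then have "n1 \<le> x" "x - n1 \<in> v" by auto
    then have "x = n1 + (x - n1)" "x - n1 \<in> v" by simp_all
    then show "x \<in> (+) n1 ` v" by (rule image_eqI)
  qed auto
qed

lemma J_layer:
  assumes "u \<in> layer n1 i1" "v \<in> layer n2 i2"
  shows "J n1 u v \<in> layer (n1 + n2) (i1 + i2)"
proof -
  have u: "u \<subseteq> {..<n1}" "card u = i1" and v: "v \<subseteq> {..<n2}" "card v = i2"
    using assms by (auto simp: layer_def)
  have fu: "finite u" using finite_subset[OF u(1)] by simp
  have fv: "finite v" using finite_subset[OF v(1)] by simp
  have disj: "u \<inter> (+) n1 ` v = {}" using u by auto
  have "card (J n1 u v) = card u + card ((+) n1 ` v)"
    unfolding J_def shift_eq by (rule card_Un_disjoint) (use fu fv disj in auto)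
  also have "card ((+) n1 ` v) = card v" by (rule card_image) (simp add: inj_on_def)
  finally have "card (J n1 u v) = i1 + i2" using u v by simp
  moreover have "J n1 u v \<subseteq> {..<n1 + n2}" using u v by (auto simp: J_def)
  ultimately show ?thesis by (simp add: layer_def)
qed

lemma J_sdiff:
  assumes "u \<subseteq> {..<n1}" "u' \<subseteq> {..<n1}"
  shows "sdiff (J n1 u v) (J n1 u' v') = J n1 (sdiff u u') (sdiff v v')"
  using assms unfolding J_def sdiff_def by auto

lemma sdiff_sub: "u \<subseteq> X \<Longrightarrow> u' \<subseteq> X \<Longrightarrow> sdiff u u' \<subseteq> X"
  by (auto simp: sdiff_def)

lemma J_inj:
  assumes "u \<subseteq> {..<n1}" "u' \<subseteq> {..<n1}" "J n1 u v = J n1 u' v'"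
  shows "u = u' \<and> v = v'"
proof -
  have 1: "J n1 u v \<inter> {..<n1} = u" using assms(1) by (auto simp: J_def)
  have 2: "J n1 u' v' \<inter> {..<n1} = u'" using assms(2) by (auto simp: J_def)
  have 3: "{j. n1 + j \<in> J n1 u v} = v" using assms(1) by (auto simp: J_def)
  have 4: "{j. n1 + j \<in> J n1 u' v'} = v'" using assms(2) by (auto simp: J_def)
  show ?thesis using 1 2 3 4 assms(3) by simp
qed

definition J4 :: "nat \<Rightarrow> (nat set \<times> nat set \<times> nat set \<times> nat set) \<times> (nat set \<times> nat set \<times> nat set \<times> nat set) \<Rightarrow> (nat set \<times> nat set \<times> nat set \<times> nat set)" where
  "J4 n1 p = (case p of ((u1, u2, u3, u4), (v1, v2, v3, v4)) \<Rightarrow>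
      (J n1 u1 v1, J n1 u2 v2, J n1 u3 v3, J n1 u4 v4))"

lemma layer_finite: "finite (layer n i)"
  unfolding layer_def by (rule finite_subset[of _ "Pow {..<n}"]) auto

lemma zs_finite: "finite (zero_sum_4tuples (layer n i))"
proof -
  have "zero_sum_4tuples (layer n i) \<subseteq> layer n i \<times> layer n i \<times> layer n i \<times> layer n i"
    by (auto simp: zero_sum_4tuples_def)
  then show ?thesis using layer_finite by (meson finite_SigmaI finite_subset)
qed

lemma zs_superadd:
  "card (zero_sum_4tuples (layer n1 i1)) * card (zero_sum_4tuples (layer n2 i2))
     \<le> card (zero_sum_4tuples (layer (n1 + n2) (i1 + i2)))"
proof -
  let ?A = "zero_sum_4tuples (layer n1 i1)" and ?B = "zero_sum_4tuples (layer n2 i2)"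
  let ?C = "zero_sum_4tuples (layer (n1 + n2) (i1 + i2))"
  have inA: "u \<subseteq> {..<n1}" if "u \<in> layer n1 i1" for u using that by (simp add: layer_def)
  have sub: "J4 n1 ` (?A \<times> ?B) \<subseteq> ?C"
  proof
    fix y assume "y \<in> J4 n1 ` (?A \<times> ?B)"
    then obtain u1 u2 u3 u4 v1 v2 v3 v4 where
      a: "(u1, u2, u3, u4) \<in> ?A" and b: "(v1, v2, v3, v4) \<in> ?B"
      and y: "y = (J n1 u1 v1, J n1 u2 v2, J n1 u3 v3, J n1 u4 v4)"
      by (auto simp: J4_def)
    have ul: "u1 \<in> layer n1 i1" "u2 \<in> layer n1 i1" "u3 \<in> layer n1 i1" "u4 \<in> layer n1 i1"
      and uz: "sdiff (sdiff u1 u2) (sdiff u3 u4) = {}"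
      using a by (auto simp: zero_sum_4tuples_def)
    have vl: "v1 \<in> layer n2 i2" "v2 \<in> layer n2 i2" "v3 \<in> layer n2 i2" "v4 \<in> layer n2 i2"
      and vz: "sdiff (sdiff v1 v2) (sdiff v3 v4) = {}"
      using b by (auto simp: zero_sum_4tuples_def)
    have "sdiff (sdiff (J n1 u1 v1) (J n1 u2 v2)) (sdiff (J n1 u3 v3) (J n1 u4 v4))
        = J n1 (sdiff (sdiff u1 u2) (sdiff u3 u4)) (sdiff (sdiff v1 v2) (sdiff v3 v4))"
      using inA[OF ul(1)] inA[OF ul(2)] inA[OF ul(3)] inA[OF ul(4)]
      by (simp add: J_sdiff sdiff_sub)
    also have "\<dots> = {}" using uz vz by (simp add: J_def)
    finally show "y \<in> ?C" unfolding y zero_sum_4tuples_def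
      using J_layer ul vl by auto
  qed
  have inj: "inj_on (J4 n1) (?A \<times> ?B)"
  proof (rule inj_onI)
    fix p p' assume p: "p \<in> ?A \<times> ?B" and p': "p' \<in> ?A \<times> ?B" and e: "J4 n1 p = J4 n1 p'"
    obtain u1 u2 u3 u4 v1 v2 v3 v4 where pp: "p = ((u1, u2, u3, u4), (v1, v2, v3, v4))"
      by (metis prod.collapse)
    obtain u1' u2' u3' u4' v1' v2' v3' v4' where pp': "p' = ((u1', u2', u3', u4'), (v1', v2', v3', v4'))"
      by (metis prod.collapse)
    have U: "u1 \<subseteq> {..<n1}" "u2 \<subseteq> {..<n1}" "u3 \<subseteq> {..<n1}" "u4 \<subseteq> {..<n1}"
      using p unfolding pp by (auto simp: zero_sum_4tuples_def layer_def)
    have U': "u1' \<subseteq> {..<n1}" "u2' \<subseteq> {..<n1}" "u3' \<subseteq> {..<n1}" "u4' \<subseteq> {..<n1}"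
      using p' unfolding pp' by (auto simp: zero_sum_4tuples_def layer_def)
    have E: "J n1 u1 v1 = J n1 u1' v1'" "J n1 u2 v2 = J n1 u2' v2'"
      "J n1 u3 v3 = J n1 u3' v3'" "J n1 u4 v4 = J n1 u4' v4'"
      using e unfolding pp pp' J4_def by auto
    show "p = p'" unfolding pp pp'
      using J_inj[OF U(1) U'(1) E(1)] J_inj[OF U(2) U'(2) E(2)]
        J_inj[OF U(3) U'(3) E(3)] J_inj[OF U(4) U'(4) E(4)] by simp
  qed
  have "card ?A * card ?B = card (J4 n1 ` (?A \<times> ?B))"
    using card_image[OF inj] by (simp add: card_cartesian_product)
  also have "\<dots> \<le> card ?C" by (rule card_mono[OF zs_finite sub])
  finally show ?thesis .
qed

lemma zs_pos:
  assumes "i \<le> n"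
  shows "1 \<le> card (zero_sum_4tuples (layer n i))"
proof -
  obtain u where u: "u \<subseteq> {..<n}" "card u = i"
    using assms by (metis card_lessThan obtain_subset_with_card_n)
  then have "(u, u, u, u) \<in> zero_sum_4tuples (layer n i)"
    by (simp add: zero_sum_4tuples_def layer_def sdiff_def)
  then show ?thesis using zs_finite
    by (metis One_nat_def Suc_leI card_gt_0_iff empty_iff)
qed

lemma card_layer: "card (layer n i) = n choose i"
  unfolding layer_def by (subst n_subsets) auto

lemma layer_le: "card (layer n i) \<le> 2 ^ n"
proof -
  have "card (layer n i) \<le> card (Pow {..<n})"
    by (rule card_mono) (auto simp: layer_def)
  then show ?thesis by (simp add: card_Pow)
qed

lemma zs_le: "card (zero_sum_4tuples (layer n i)) \<le> 2 ^ (4 * n)"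
proof -
  have "card (zero_sum_4tuples (layer n i)) \<le> card (layer n i \<times> layer n i \<times> layer n i \<times> layer n i)"
    by (rule card_mono) (auto simp: zero_sum_4tuples_def finite_cartesian_product layer_finite)
  also have "\<dots> = card (layer n i) ^ 4" by (simp add: card_cartesian_product power4_eq_xxxx)
  also have "\<dots> \<le> (2 ^ n) ^ 4" by (rule power_mono[OF layer_le]) simp
  finally show ?thesis by (simp add: power_mult[symmetric] mult.commute)
qed

lemma layer_entropy:
  assumes g: "0 < \<gamma>" "\<gamma> < 1" and i: "real i = \<gamma> * real n"
  shows "real (card (layer n i)) \<le> 2 powr (real n * bin_entropy \<gamma>)"
proof -
  have iln: "i \<le> n"
  proof -
    have "\<gamma> * real n \<le> real n" using g by (intro mult_left_le_one_le) auto
    then show ?thesis using i by linarith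
  qed
  have "(\<Sum>k\<le>n. real (n choose k) * \<gamma> ^ k * (1 - \<gamma>) ^ (n - k)) = (\<gamma> + (1 - \<gamma>)) ^ n"
    by (rule binomial_ring[symmetric])
  then have sum1: "(\<Sum>k\<le>n. real (n choose k) * \<gamma> ^ k * (1 - \<gamma>) ^ (n - k)) = 1" by simp
  have "real (n choose i) * \<gamma> ^ i * (1 - \<gamma>) ^ (n - i) \<le> (\<Sum>k\<le>n. real (n choose k) * \<gamma> ^ k * (1 - \<gamma>) ^ (n - k))"
    by (rule member_le_sum) (use g iln in auto)
  then have le1: "real (n choose i) * (\<gamma> ^ i * (1 - \<gamma>) ^ (n - i)) \<le> 1" using sum1 by (simp add: mult.assoc)
  have ni: "real (n - i) = (1 - \<gamma>) * real n" using iln i by (simp add: algebra_simps)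
  have pw: "x ^ k = 2 powr (real k * log 2 x)" if "x > 0" for x :: real and k :: nat
  proof -
    have "2 powr (real k * log 2 x) = (2 powr (log 2 x)) powr real k" by (simp add: powr_powr mult.commute)
    also have "\<dots> = x powr real k" using that by simp
    also have "\<dots> = x ^ k" using that by (simp add: powr_realpow)
    finally show ?thesis by simp
  qed
  have a: "\<gamma> ^ i = 2 powr (real i * log 2 \<gamma>)" using g by (intro pw) auto
  have b: "(1 - \<gamma>) ^ (n - i) = 2 powr (real (n - i) * log 2 (1 - \<gamma>))" using g by (intro pw) auto
  have h: "bin_entropy \<gamma> = - (\<gamma> * log 2 \<gamma> + (1 - \<gamma>) * log 2 (1 - \<gamma>))"
    unfolding bin_entropy_def using g by (simp add: log_divide)
  have "\<gamma> ^ i * (1 - \<gamma>) ^ (n - i) = 2 powr (real i * log 2 \<gamma> + real (n - i) * log 2 (1 - \<gamma>))"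
    unfolding a b by (simp add: powr_add)
  also have "real i * log 2 \<gamma> + real (n - i) * log 2 (1 - \<gamma>) = - (real n * bin_entropy \<gamma>)"
    unfolding ni i h by (simp add: algebra_simps)
  finally have e: "\<gamma> ^ i * (1 - \<gamma>) ^ (n - i) = 2 powr (- (real n * bin_entropy \<gamma>))" .
  have "real (n choose i) \<le> 1 / 2 powr (- (real n * bin_entropy \<gamma>))"
    using le1 unfolding e by (simp add: field_simps)
  then show ?thesis by (simp add: card_layer powr_minus divide_inverse)
qed

lemma superadd_iter:
  fixes a :: "nat \<Rightarrow> real"
  assumes sup: "\<And>k l. a k + a l \<le> a (k + l)"
  shows "real s * a K + a r \<le> a (s * K + r)"
proof (induction s)
  case 0 then show ?case by simp
next
  case (Suc s)
  have "a K + a (s * K + r) \<le> a (K + (s * K + r))" by (rule sup)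
  then show ?case using Suc by (simp add: algebra_simps)
qed

lemma fekete:
  fixes a :: "nat \<Rightarrow> real"
  assumes sup: "\<And>k l. a k + a l \<le> a (k + l)"
    and bnd: "\<And>k. a k \<le> B * real k"
  defines "\<sigma> \<equiv> (SUP k\<in>{1..}. a k / real k)"
  shows "\<And>k. k \<ge> 1 \<Longrightarrow> a k / real k \<le> \<sigma>"
    and "(\<lambda>k. a k / real k) \<longlonglongrightarrow> \<sigma>"
proof -
  have bdd: "bdd_above ((\<lambda>k. a k / real k) ` {1..})"
  proof (rule bdd_aboveI2)
    fix k :: nat assume "k \<in> {1..}"
    then show "a k / real k \<le> B" using bnd[of k] by (simp add: divide_le_eq mult.commute)
  qed
  show up: "a k / real k \<le> \<sigma>" if "k \<ge> 1" for k
    unfolding \<sigma>_def by (rule cSUP_upper[OF _ bdd]) (use that in auto)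
  show "(\<lambda>k. a k / real k) \<longlonglongrightarrow> \<sigma>"
  proof (rule LIMSEQ_I)
    fix \<epsilon> :: real assume e: "0 < \<epsilon>"
    have ne: "{1::nat..} \<noteq> {}" by auto
    have "\<sigma> - \<epsilon>/2 < \<sigma>" using e by simp
    then have "\<exists>K\<in>{1..}. \<sigma> - \<epsilon>/2 < a K / real K"
      using less_cSUP_iff[OF ne bdd, of "\<sigma> - \<epsilon>/2"] unfolding \<sigma>_def by blast
    then obtain K where K: "K \<in> {1..}" "\<sigma> - \<epsilon>/2 < a K / real K" by blast
    then have K1: "K \<ge> 1" by simp
    define c where "c = Min (a ` {..<K})"
    have c: "c \<le> a r" if "r < K" for r unfolding c_def using that by (intro Min_le) auto
    define D where "D = real K * \<bar>a K / real K\<bar> + \<bar>c\<bar>"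
    have D0: "D \<ge> 0" unfolding D_def by simp
    obtain N where N: "real N > 2 * D / \<epsilon>" using reals_Archimedean2 by blast
    show "\<exists>no. \<forall>k\<ge>no. norm (a k / real k - \<sigma>) < \<epsilon>"
    proof (intro exI[of _ "max N K + 1"] allI impI)
      fix k assume k: "max N K + 1 \<le> k"
      then have kpos: "real k > 0" by simp
      define s where "s = k div K"
      define r where "r = k mod K"
      have kr: "k = s * K + r" unfolding s_def r_def by simp
      have rK: "r < K" unfolding r_def using K1 by simp
      have "real s * a K + a r \<le> a k" using superadd_iter[OF sup, of s K r] kr by simp
      then have low: "real s * a K + c \<le> a k" using c[OF rK] by simp
      have sK: "real s * real K = real k - real r" using kr by (simp add: algebra_simps)
      have "real s * a K = (real s * real K) * (a K / real K)"
        using K1 by simp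
      then have "real s * a K = (real k - real r) * (a K / real K)"
        by (simp only: sK)
      then have "(real k - real r) * (a K / real K) + c \<le> a k" using low by simp
      moreover have "real r * (a K / real K) \<le> D - \<bar>c\<bar>"
      proof -
        have "real r * (a K / real K) \<le> real r * \<bar>a K / real K\<bar>" by (intro mult_left_mono) (rule abs_ge_self, simp)
        also have "\<dots> \<le> real K * \<bar>a K / real K\<bar>" using rK by (intro mult_right_mono) auto
        finally show ?thesis unfolding D_def by simp
      qed
      ultimately have "real k * (a K / real K) - D \<le> a k"
        using abs_ge_self[of c] abs_ge_minus_self[of c] unfolding left_diff_distrib by linarith
      then have "(real k * (a K / real K) - D) / real k \<le> a k / real k"
        using kpos by (intro divide_right_mono) auto
      moreover have "(real k * (a K / real K) - D) / real k = a K / real K - D / real k"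
        using kpos by (simp add: diff_divide_distrib)
      ultimately have "a K / real K - D / real k \<le> a k / real k" by simp
      moreover have "D / real k < \<epsilon> / 2"
      proof -
        have "real k > real N" using k by simp
        then have "real k > 2 * D / \<epsilon>" using N by simp
        then have "real k * \<epsilon> > 2 * D" using e by (simp add: field_simps)
        then show ?thesis using kpos by (simp add: field_simps)
      qed
      ultimately have "a k / real k > \<sigma> - \<epsilon>" using K(2) by simp
      moreover have "a k / real k \<le> \<sigma>" using up k by simp
      ultimately show "norm (a k / real k - \<sigma>) < \<epsilon>" by simp
    qed
  qed
qed

fun tl4 :: "nat set \<times> nat set \<times> nat set \<times> nat set \<Rightarrow> nat set list" where
  "tl4 (u1, u2, u3, u4) = [u1, u2, u3, u4]"

definition NTs :: "nat \<Rightarrow> nat \<Rightarrow> (nat set \<times> nat set \<times> nat set \<times> nat set) set" where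
  "NTs n i = {(u1, u2, u3, u4) \<in> zero_sum_4tuples (layer n i).
      u1 \<noteq> u2 \<and> u1 \<noteq> u3 \<and> u1 \<noteq> u4 \<and> u2 \<noteq> u3 \<and> u2 \<noteq> u4 \<and> u3 \<noteq> u4}"

lemma N_count_eq:
  "N_count n i C = card {t \<in> NTs n i. set (tl4 t) \<subseteq> C}"
proof -
  have "{(u1, u2, u3, u4) \<in> zero_sum_4tuples (C \<inter> layer n i).
      u1 \<noteq> u2 \<and> u1 \<noteq> u3 \<and> u1 \<noteq> u4 \<and> u2 \<noteq> u3 \<and> u2 \<noteq> u4 \<and> u3 \<noteq> u4}
    = {t \<in> NTs n i. set (tl4 t) \<subseteq> C}"
    by (auto simp: NTs_def zero_sum_4tuples_def)
  then show ?thesis unfolding N_count_def by simp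
qed

lemma NTs_finite: "finite (NTs n i)"
  unfolding NTs_def by (rule finite_subset[OF _ zs_finite]) auto

lemma NTs_sub: "NTs n i \<subseteq> zero_sum_4tuples (layer n i)"
  unfolding NTs_def by auto

lemma sdiff_zero_solve: "sdiff (sdiff a b) (sdiff c d) = {} \<Longrightarrow> d = sdiff a (sdiff b c)"
  by (auto simp: sdiff_def)

lemma sdiff_cancel_left: "sdiff a x = sdiff a y \<Longrightarrow> x = y"
  by (auto simp: sdiff_def)

lemma sdiff_empty_right[simp]: "sdiff x {} = x"
  by (auto simp: sdiff_def)

lemma sdiff_self_eq: "sdiff x y = x \<Longrightarrow> y = {}"
  by (auto simp: sdiff_def)

lemma sdiff_eq_empty: "sdiff x y = {} \<Longrightarrow> x = y"
  by (auto simp: sdiff_def)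

lemma NT_props:
  assumes "(u1, u2, u3, u4) \<in> NTs n i" "i \<ge> 1"
  shows "indep [u1, u2, u3]" "u4 = sdiff u1 (sdiff u2 u3)"
    "u1 \<subseteq> {..<n}" "u2 \<subseteq> {..<n}" "u3 \<subseteq> {..<n}" "u4 \<subseteq> {..<n}"
proof -
  have L: "u1 \<in> layer n i" "u2 \<in> layer n i" "u3 \<in> layer n i" "u4 \<in> layer n i"
    and z: "sdiff (sdiff u1 u2) (sdiff u3 u4) = {}"
    and d: "u1 \<noteq> u2" "u1 \<noteq> u3" "u1 \<noteq> u4" "u2 \<noteq> u3" "u2 \<noteq> u4" "u3 \<noteq> u4"
    using assms(1) by (auto simp: NTs_def zero_sum_4tuples_def)
  have ne: "x \<noteq> {}" if "x \<in> layer n i" for x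
    using that assms(2) by (auto simp: layer_def)
  show u4: "u4 = sdiff u1 (sdiff u2 u3)" using sdiff_zero_solve[OF z] .
  show "u1 \<subseteq> {..<n}" "u2 \<subseteq> {..<n}" "u3 \<subseteq> {..<n}" "u4 \<subseteq> {..<n}"
    using L by (auto simp: layer_def)
  have "u1 \<noteq> sdiff u2 u3"
  proof
    assume "u1 = sdiff u2 u3"
    then have "u4 = sdiff u1 u1" using u4 by simp
    then have "u4 = {}" by (simp add: sdiff_def)
    then show False using ne[OF L(4)] by simp
  qed
  then show "indep [u1, u2, u3]"
    using ne[OF L(1)] ne[OF L(2)] ne[OF L(3)] d by auto
qed

lemma tl4_span:
  assumes "(u1, u2, u3, u4) \<in> NTs n i" "i \<ge> 1" and that: "{u1, u2, u3} \<subseteq> set (spanl G)"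
  shows "set (tl4 (u1, u2, u3, u4)) \<subseteq> set (spanl G)"
proof -
  have "sdiff u2 u3 \<in> set (spanl G)" using that by (intro spanl_closed) auto
  then have "sdiff u1 (sdiff u2 u3) \<in> set (spanl G)" using that by (intro spanl_closed) auto
  then show ?thesis using that NT_props(2)[OF assms(1,2)] by auto
qed

lemma cnt_pow:
  "(2 ^ n / 2 ^ s) ^ m = (2::real) ^ (m * n) * ((1/2) ^ m) ^ s"
  by (simp add: power_divide power_mult[symmetric] mult.commute power_one_over)

lemma cnt_single:
  assumes "t \<in> NTs n i" "i \<ge> 1"
  shows "real (cntM m n (tl4 t)) = 2 ^ (m * n) * ((1/2) ^ m) ^ 3"
proof -
  obtain u1 u2 u3 u4 where t: "t = (u1, u2, u3, u4)" by (metis prod.collapse)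
  note A = assms(1)[unfolded t]
  note p = NT_props[OF A assms(2)]
  have "cntM m n (tl4 t) = cntM m n [u1, u2, u3]"
    unfolding t
  proof (rule cntM_span)
    show "set [u1, u2, u3] \<subseteq> set (tl4 (u1, u2, u3, u4))" by auto
    show "set (tl4 (u1, u2, u3, u4)) \<subseteq> set (spanl [u1, u2, u3])"
    proof -
      have "{u1, u2, u3} \<subseteq> set (spanl [u1, u2, u3])" using spanl_set[of "[u1, u2, u3]"] by simp
      then show ?thesis by (rule tl4_span[OF A assms(2)])
    qed
  qed
  also have "real \<dots> = (2 ^ n / 2 ^ 3) ^ m"
    using cntM_indep[of "[u1, u2, u3]" n m] p by auto
  finally show ?thesis using cnt_pow[of n 3 m] by simp
qed

lemma card_swap:
  assumes "finite A" "finite B"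
  shows "(\<Sum>a\<in>A. card {b\<in>B. P a b}) = (\<Sum>b\<in>B. card {a\<in>A. P a b})"
proof -
  have c: "card {x\<in>X. Q x} = (\<Sum>x\<in>X. if Q x then 1 else 0)" if "finite X" for X and Q :: "_ \<Rightarrow> bool"
  proof -
    have "card {x\<in>X. Q x} = (\<Sum>x\<in>{x\<in>X. Q x}. 1)" by simp
    also have "\<dots> = (\<Sum>x\<in>X. if Q x then 1 else 0)" by (rule sum.inter_filter[OF that])
    finally show ?thesis .
  qed
  have "(\<Sum>a\<in>A. card {b\<in>B. P a b}) = (\<Sum>a\<in>A. \<Sum>b\<in>B. if P a b then 1 else 0)"
    using c[OF assms(2)] by simp
  also have "\<dots> = (\<Sum>b\<in>B. \<Sum>a\<in>A. if P a b then 1 else 0)" by (rule sum.swap)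
  also have "\<dots> = (\<Sum>b\<in>B. card {a\<in>A. P a b})"
    using c[OF assms(1)] by simp
  finally show ?thesis .
qed

lemma matrices_finite: "finite (matrices m n)"
  by (simp add: matrices_def)

lemma cntM_sub: "cntM m n xs = card {M \<in> matrices m n. set xs \<subseteq> kernel_code m n M}"
  unfolding cntM_def subset_eq by (rule refl)

lemma sum_N:
  "(\<Sum>M\<in>matrices m n. N_count n i (kernel_code m n M)) = (\<Sum>t\<in>NTs n i. cntM m n (tl4 t))"
  unfolding N_count_eq cntM_sub by (rule card_swap[OF matrices_finite NTs_finite])

lemma sum_N2:
  "(\<Sum>M\<in>matrices m n. N_count n i (kernel_code m n M) ^ 2)
     = (\<Sum>t\<in>NTs n i. \<Sum>t'\<in>NTs n i. cntM m n (tl4 t @ tl4 t'))"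
proof -
  have sq: "card {t \<in> NTs n i. set (tl4 t) \<subseteq> kernel_code m n M} ^ 2
      = card {p \<in> NTs n i \<times> NTs n i. set (tl4 (fst p) @ tl4 (snd p)) \<subseteq> kernel_code m n M}" for M
  proof -
    have "{p \<in> NTs n i \<times> NTs n i. set (tl4 (fst p) @ tl4 (snd p)) \<subseteq> kernel_code m n M}
        = {t \<in> NTs n i. set (tl4 t) \<subseteq> kernel_code m n M} \<times> {t \<in> NTs n i. set (tl4 t) \<subseteq> kernel_code m n M}"
      by auto
    then show ?thesis by (simp add: card_cartesian_product power2_eq_square)
  qed
  have "(\<Sum>M\<in>matrices m n. N_count n i (kernel_code m n M) ^ 2)
      = (\<Sum>M\<in>matrices m n. card {p \<in> NTs n i \<times> NTs n i. set (tl4 (fst p) @ tl4 (snd p)) \<subseteq> kernel_code m n M})"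
    unfolding N_count_eq sq ..
  also have "\<dots> = (\<Sum>p\<in>NTs n i \<times> NTs n i. card {M \<in> matrices m n. set (tl4 (fst p) @ tl4 (snd p)) \<subseteq> kernel_code m n M})"
    by (rule card_swap) (simp_all add: matrices_finite NTs_finite)
  also have "\<dots> = (\<Sum>p\<in>NTs n i \<times> NTs n i. cntM m n (tl4 (fst p) @ tl4 (snd p)))"
    unfolding cntM_sub ..
  also have "\<dots> = (\<Sum>t\<in>NTs n i. \<Sum>t'\<in>NTs n i. cntM m n (tl4 t @ tl4 t'))"
  proof -
    have "(\<Sum>p\<in>NTs n i \<times> NTs n i. cntM m n (tl4 (fst p) @ tl4 (snd p)))
        = (\<Sum>(t, t')\<in>NTs n i \<times> NTs n i. cntM m n (tl4 t @ tl4 t'))"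
      by (rule sum.cong) auto
    then show ?thesis by (simp only: sum.cartesian_product)
  qed
  finally show ?thesis .
qed

lemma gr_length: "length (gr B x) \<le> Suc (length B)"
  by (simp add: gr_def)

lemma cnt_pair:
  assumes t: "(u1, u2, u3, u4) \<in> NTs n i" and t': "(a, b, c, d) \<in> NTs n i" and i: "i \<ge> 1"
  defines "G \<equiv> gr (gr (gr [u1, u2, u3] a) b) c"
  shows "real (cntM m n (tl4 (u1, u2, u3, u4) @ tl4 (a, b, c, d))) = 2 ^ (m * n) * ((1/2) ^ m) ^ length G"
    and "length G \<le> 6"
proof -
  note p = NT_props[OF t i]
  note p' = NT_props[OF t' i]
  let ?B = "[u1, u2, u3]"
  have m1: "set (spanl ?B) \<subseteq> set (spanl (gr ?B a))" by (rule gr_span_mono)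
  have m2: "set (spanl (gr ?B a)) \<subseteq> set (spanl (gr (gr ?B a) b))" by (rule gr_span_mono)
  have m3: "set (spanl (gr (gr ?B a) b)) \<subseteq> set (spanl G)" unfolding G_def by (rule gr_span_mono)
  have spB: "set (spanl ?B) \<subseteq> set (spanl G)" using m1 m2 m3 by blast
  have s1: "{u1, u2, u3} \<subseteq> set (spanl G)" using spanl_set[of ?B] spB by auto
  have s2: "{a, b, c} \<subseteq> set (spanl G)"
  proof -
    have "a \<in> set (spanl (gr ?B a))" by (rule gr_span_self)
    then have "a \<in> set (spanl G)" using m2 m3 by blast
    moreover have "b \<in> set (spanl (gr (gr ?B a) b))" by (rule gr_span_self)
    then have "b \<in> set (spanl G)" using m3 by blast
    moreover have "c \<in> set (spanl G)" unfolding G_def by (rule gr_span_self)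
    ultimately show ?thesis by simp
  qed
  have "cntM m n (tl4 (u1, u2, u3, u4) @ tl4 (a, b, c, d)) = cntM m n G"
  proof (rule cntM_span)
    have h1: "set (gr ?B a) \<subseteq> insert a (set ?B)" by (rule gr_set)
    have h2: "set (gr (gr ?B a) b) \<subseteq> insert b (set (gr ?B a))" by (rule gr_set)
    have h3: "set G \<subseteq> insert c (set (gr (gr ?B a) b))" unfolding G_def by (rule gr_set)
    have "set G \<subseteq> {c, b, a, u1, u2, u3}" using h1 h2 h3 by auto
    then show "set G \<subseteq> set (tl4 (u1, u2, u3, u4) @ tl4 (a, b, c, d))" by auto
    show "set (tl4 (u1, u2, u3, u4) @ tl4 (a, b, c, d)) \<subseteq> set (spanl G)"
      using tl4_span[OF t i s1] tl4_span[OF t' i s2] by simp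
  qed
  moreover have "indep G" unfolding G_def using p(1) by (intro gr_indep)
  moreover have "set G \<subseteq> Pow {..<n}"
    unfolding G_def using p p' by (intro gr_sub) auto
  ultimately show "real (cntM m n (tl4 (u1, u2, u3, u4) @ tl4 (a, b, c, d))) = 2 ^ (m * n) * ((1/2) ^ m) ^ length G"
    using cntM_indep[of G n m] cnt_pow[of n "length G" m] by simp
  have "length (gr ?B a) \<le> 4" using gr_length[of ?B a] by simp
  then have "length (gr (gr ?B a) b) \<le> 5" using gr_length[of "gr ?B a" b] by simp
  then show "length G \<le> 6" unfolding G_def using gr_length[of "gr (gr ?B a) b" c] by simp
qed

fun f3 :: "nat set \<times> nat set \<times> nat set \<times> nat set \<Rightarrow> nat set \<times> nat set \<times> nat set" where
  "f3 (a, b, c, d) = (a, b, c)"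

lemma f3_inj: "i \<ge> 1 \<Longrightarrow> inj_on f3 (NTs n i)"
proof (rule inj_onI)
  fix x y assume i: "i \<ge> 1" and x: "x \<in> NTs n i" and y: "y \<in> NTs n i" and e: "f3 x = f3 y"
  obtain a b c d where xx: "x = (a, b, c, d)" by (metis prod.collapse)
  obtain a' b' c' d' where yy: "y = (a', b', c', d')" by (metis prod.collapse)
  have "d = sdiff a (sdiff b c)" using NT_props(2)[OF x[unfolded xx] i] .
  moreover have "d' = sdiff a' (sdiff b' c')" using NT_props(2)[OF y[unfolded yy] i] .
  ultimately show "x = y" using e unfolding xx yy by simp
qed

lemma NS3: "NS L P 3 B = (\<Sum>a\<in>L. \<Sum>b\<in>L. \<Sum>c\<in>L. w0 P (length (gr (gr (gr B a) b) c)))"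
  by (simp add: numeral_3_eq_3)

lemma sum3: "(\<Sum>a\<in>L. \<Sum>b\<in>L. \<Sum>c\<in>L. h a b c) = (\<Sum>x\<in>L \<times> L \<times> L. case x of (a, b, c) \<Rightarrow> h a b c)"
  by (simp add: sum.cartesian_product')

lemma pair_sum_bound:
  assumes t: "(u1, u2, u3, u4) \<in> NTs n i" and i: "i \<ge> 1"
  shows "(\<Sum>t'\<in>NTs n i. real (cntM m n (tl4 (u1, u2, u3, u4) @ tl4 t')) - 2 ^ (m * n) * ((1/2) ^ m) ^ 6)
     \<le> 2 ^ (m * n) * NS (layer n i) ((1/2) ^ m) 3 [u1, u2, u3]"
proof -
  define Z :: real where "Z = 2 ^ (m * n)"
  define P :: real where "P = (1/2) ^ m"
  have P0: "0 \<le> P" unfolding P_def by simp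
  have Z0: "0 \<le> Z" unfolding Z_def by simp
  define g where "g x = (case x of (a, b, c) \<Rightarrow> Z * w0 P (length (gr (gr (gr [u1, u2, u3] a) b) c)))" for x
  have g0: "0 \<le> g x" for x
    unfolding g_def using P0 Z0 by (auto simp: w0_def split: prod.splits)
  have le: "real (cntM m n (tl4 (u1, u2, u3, u4) @ tl4 t')) - Z * P ^ 6 \<le> g (f3 t')"
    if "t' \<in> NTs n i" for t'
  proof -
    obtain a b c d where tt: "t' = (a, b, c, d)" by (metis prod.collapse)
    let ?G = "gr (gr (gr [u1, u2, u3] a) b) c"
    note cp = cnt_pair[OF t that[unfolded tt] i]
    have "Z * P ^ length ?G - Z * P ^ 6 \<le> Z * w0 P (length ?G)"
    proof (cases "length ?G < 6")
      case True then show ?thesis using Z0 P0 by (simp add: w0_def)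
    next
      case False then have "length ?G = 6" using cp(2) by simp
      then show ?thesis by (simp add: w0_def)
    qed
    then show ?thesis using cp(1) unfolding tt g_def Z_def P_def by simp
  qed
  have "(\<Sum>t'\<in>NTs n i. real (cntM m n (tl4 (u1, u2, u3, u4) @ tl4 t')) - Z * P ^ 6)
      \<le> (\<Sum>t'\<in>NTs n i. g (f3 t'))"
    by (rule sum_mono) (rule le)
  also have "\<dots> = (\<Sum>x\<in>f3 ` NTs n i. g x)"
    by (rule sum.reindex[OF f3_inj[OF i], symmetric, unfolded comp_def])
  also have "\<dots> \<le> (\<Sum>x\<in>layer n i \<times> layer n i \<times> layer n i. g x)"
  proof (rule sum_mono2)
    show "finite (layer n i \<times> layer n i \<times> layer n i)" by (simp add: layer_finite)
    show "f3 ` NTs n i \<subseteq> layer n i \<times> layer n i \<times> layer n i"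
      by (auto simp: NTs_def zero_sum_4tuples_def)
    show "\<And>b. b \<in> layer n i \<times> layer n i \<times> layer n i - f3 ` NTs n i \<Longrightarrow> 0 \<le> g b" by (rule g0)
  qed
  also have "\<dots> = Z * NS (layer n i) P 3 [u1, u2, u3]"
    unfolding NS3 sum_distrib_left sum3 g_def by (rule sum.cong) (auto split: prod.splits)
  finally show ?thesis unfolding Z_def P_def .
qed

lemma chebyshev_count:
  fixes f :: "'a \<Rightarrow> real"
  assumes "finite A" "d > 0"
  shows "real (card {x\<in>A. d \<le> \<bar>f x\<bar>}) * d^2 \<le> (\<Sum>x\<in>A. (f x)^2)"
proof -
  have "real (card {x\<in>A. d \<le> \<bar>f x\<bar>}) * d^2 = (\<Sum>x\<in>{x\<in>A. d \<le> \<bar>f x\<bar>}. d^2)" by simp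
  also have "\<dots> \<le> (\<Sum>x\<in>{x\<in>A. d \<le> \<bar>f x\<bar>}. (f x)^2)"
  proof (rule sum_mono)
    fix x assume "x \<in> {x\<in>A. d \<le> \<bar>f x\<bar>}"
    then have "d \<le> \<bar>f x\<bar>" by simp
    then have "d^2 \<le> \<bar>f x\<bar>^2" using assms(2) by (intro power_mono) auto
    then show "d^2 \<le> (f x)^2" by simp
  qed
  also have "\<dots> \<le> (\<Sum>x\<in>A. (f x)^2)" by (rule sum_mono2) (use assms(1) in auto)
  finally show ?thesis .
qed

lemma markov_count:
  fixes f :: "'a \<Rightarrow> real"
  assumes "finite A" "X > 0" "\<And>x. 0 \<le> f x"
  shows "real (card {x\<in>A. X \<le> f x}) * X \<le> (\<Sum>x\<in>A. f x)"
proof -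
  have "real (card {x\<in>A. X \<le> f x}) * X = (\<Sum>x\<in>{x\<in>A. X \<le> f x}. X)" by simp
  also have "\<dots> \<le> (\<Sum>x\<in>{x\<in>A. X \<le> f x}. f x)" by (rule sum_mono) auto
  also have "\<dots> \<le> (\<Sum>x\<in>A. f x)" by (rule sum_mono2) (use assms in auto)
  finally show ?thesis .
qed

lemma sum_N_real:
  assumes "i \<ge> 1"
  shows "(\<Sum>M\<in>matrices m n. real (N_count n i (kernel_code m n M)))
       = 2 ^ (m * n) * (real (card (NTs n i)) * ((1/2) ^ m) ^ 3)"
proof -
  have "(\<Sum>M\<in>matrices m n. real (N_count n i (kernel_code m n M)))
      = real (\<Sum>M\<in>matrices m n. N_count n i (kernel_code m n M))" by simp
  also have "\<dots> = (\<Sum>t\<in>NTs n i. real (cntM m n (tl4 t)))" unfolding sum_N by simp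
  also have "\<dots> = (\<Sum>t\<in>NTs n i. 2 ^ (m * n) * ((1/2) ^ m) ^ 3)"
    by (rule sum.cong) (use cnt_single[OF _ assms] in auto)
  finally show ?thesis by simp
qed

lemma sum_N2_real:
  assumes "i \<ge> 1"
  shows "(\<Sum>M\<in>matrices m n. real (N_count n i (kernel_code m n M)) ^ 2)
       \<le> 2 ^ (m * n) * (real (card (NTs n i))^2 * ((1/2) ^ m) ^ 6
            + real (card (NTs n i)) * W ((1/2) ^ m) (card (layer n i)) 3 3)"
proof -
  define Z :: real where "Z = 2 ^ (m * n)"
  define P :: real where "P = (1/2) ^ m"
  define K where "K = real (card (NTs n i))"
  define w where "w = W P (card (layer n i)) 3 3"
  have P0: "0 \<le> P" unfolding P_def by simp
  have Z0: "0 \<le> Z" unfolding Z_def by simp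
  have inner: "(\<Sum>t'\<in>NTs n i. real (cntM m n (tl4 t @ tl4 t'))) \<le> K * Z * P ^ 6 + Z * w"
    if "t \<in> NTs n i" for t
  proof -
    obtain u1 u2 u3 u4 where tt: "t = (u1, u2, u3, u4)" by (metis prod.collapse)
    have ind: "indep [u1, u2, u3]" using NT_props(1)[OF that[unfolded tt] assms] .
    have "(\<Sum>t'\<in>NTs n i. real (cntM m n (tl4 t @ tl4 t')) - Z * P ^ 6) \<le> Z * NS (layer n i) P 3 [u1, u2, u3]"
      using pair_sum_bound[OF that[unfolded tt] assms] unfolding tt Z_def P_def .
    also have "\<dots> \<le> Z * w"
    proof -
      have l3: "length [u1, u2, u3] = 3" by simp
      have "NS (layer n i) P 3 [u1, u2, u3] \<le> w"
        using NS_bound[OF layer_finite[of n i] P0 ind, where k=3] unfolding l3 w_def .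
      then show ?thesis using Z0 by (rule mult_left_mono)
    qed
    finally have "(\<Sum>t'\<in>NTs n i. real (cntM m n (tl4 t @ tl4 t'))) - K * (Z * P ^ 6) \<le> Z * w"
      unfolding sum_subtractf K_def by simp
    then show ?thesis by (simp add: algebra_simps)
  qed
  have "(\<Sum>M\<in>matrices m n. real (N_count n i (kernel_code m n M)) ^ 2)
      = real (\<Sum>M\<in>matrices m n. N_count n i (kernel_code m n M) ^ 2)" by simp
  also have "\<dots> = (\<Sum>t\<in>NTs n i. \<Sum>t'\<in>NTs n i. real (cntM m n (tl4 t @ tl4 t')))"
    unfolding sum_N2 by simp
  also have "\<dots> \<le> (\<Sum>t\<in>NTs n i. K * Z * P ^ 6 + Z * w)"
    by (rule sum_mono) (rule inner)
  also have "\<dots> = Z * (K^2 * P ^ 6 + K * w)" by (simp add: K_def algebra_simps power2_eq_square)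
  finally show ?thesis unfolding Z_def P_def K_def w_def .
qed

lemma sq6: "(K * P ^ 3)^2 = K^2 * P ^ 6" for K P :: real
  by (simp add: power_mult_distrib power_mult[symmetric])

lemma var_bound:
  fixes m n i :: nat
  assumes "i \<ge> 1"
  defines "E \<equiv> real (card (NTs n i)) * ((1/2) ^ m) ^ 3"
  shows "(\<Sum>M\<in>matrices m n. (real (N_count n i (kernel_code m n M)) - E)^2)
       \<le> 2 ^ (m * n) * real (card (NTs n i)) * W ((1/2) ^ m) (card (layer n i)) 3 3"
proof -
  define Z :: real where "Z = 2 ^ (m * n)"
  define N where "N M = real (N_count n i (kernel_code m n M))" for M
  have cM: "real (card (matrices m n)) = Z" unfolding Z_def card_matrices by simp
  have s1: "(\<Sum>M\<in>matrices m n. N M) = Z * E"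
    unfolding N_def Z_def E_def using sum_N_real[OF assms(1)] by simp
  have "(\<Sum>M\<in>matrices m n. (N M - E)^2) = (\<Sum>M\<in>matrices m n. (N M)^2 - 2 * E * N M + E^2)"
    by (simp add: power2_diff algebra_simps)
  also have "\<dots> = (\<Sum>M\<in>matrices m n. (N M)^2) - 2 * E * (\<Sum>M\<in>matrices m n. N M) + Z * E^2"
    by (simp add: sum.distrib sum_subtractf sum_distrib_left cM)
  also have "\<dots> = (\<Sum>M\<in>matrices m n. (N M)^2) - Z * E^2"
    unfolding s1 by (simp add: power2_eq_square)
  also have "\<dots> \<le> Z * (real (card (NTs n i))^2 * ((1/2) ^ m) ^ 6
            + real (card (NTs n i)) * W ((1/2) ^ m) (card (layer n i)) 3 3) - Z * E^2"
    using sum_N2_real[OF assms(1), where m=m and n=n] unfolding N_def Z_def by simp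
  also have "\<dots> = Z * real (card (NTs n i)) * W ((1/2) ^ m) (card (layer n i)) 3 3"
    unfolding E_def using sq6[of "real (card (NTs n i))" "(1/2)^m"] by (simp add: algebra_simps)
  finally show ?thesis unfolding N_def Z_def .
qed

lemma card_split_compl:
  assumes "finite A"
  shows "card {x\<in>A. P x} = card A - card {x\<in>A. \<not> P x}"
    and "card {x\<in>A. P x} + card {x\<in>A. \<not> P x} = card A"
proof -
  have "card A = card ({x\<in>A. P x} \<union> {x\<in>A. \<not> P x})" by (rule arg_cong[where f=card]) auto
  also have "\<dots> = card {x\<in>A. P x} + card {x\<in>A. \<not> P x}"
    by (rule card_Un_disjoint) (use assms in auto)
  finally show "card {x\<in>A. P x} + card {x\<in>A. \<not> P x} = card A" by simp
  then show "card {x\<in>A. P x} = card A - card {x\<in>A. \<not> P x}" by simp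
qed

lemma prob_ge:
  assumes "real (card {M\<in>matrices m n. \<not> Q M}) \<le> B"
  shows "prob_matrix m n Q \<ge> 1 - B / 2 ^ (m * n)"
proof -
  have Z: "real (card (matrices m n)) = 2 ^ (m * n)" by (simp add: card_matrices)
  have "real (card {M\<in>matrices m n. Q M}) = 2 ^ (m * n) - real (card {M\<in>matrices m n. \<not> Q M})"
  proof -
    have c: "card {M\<in>matrices m n. Q M} + card {M\<in>matrices m n. \<not> Q M} = card (matrices m n)"
      by (rule card_split_compl(2)[OF matrices_finite])
    have "real (card {M\<in>matrices m n. Q M}) + real (card {M\<in>matrices m n. \<not> Q M}) = real (card (matrices m n))"
      unfolding of_nat_add[symmetric] c ..
    then show ?thesis using Z by linarith
  qed
  then have "real (card {M\<in>matrices m n. Q M}) \<ge> 2 ^ (m * n) - B" using assms by simp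
  then have "(2 ^ (m * n) - B) / 2 ^ (m * n) \<le> real (card {M\<in>matrices m n. Q M}) / 2 ^ (m * n)"
    by (intro divide_right_mono) auto
  moreover have "(2 ^ (m * n) - B) / 2 ^ (m * n) = 1 - B / (2::real) ^ (m * n)"
    by (simp add: diff_divide_distrib)
  ultimately show ?thesis unfolding prob_matrix_def Z by simp
qed

lemma prob_part1:
  fixes m n i :: nat and Th :: real
  assumes i: "i \<ge> 1" and n: "n > 0"
  shows "prob_matrix m n (\<lambda>M. N_count n i (kernel_code m n M) = 0 \<or>
            log 2 (real (N_count n i (kernel_code m n M))) / real n \<le> Th)
        \<ge> 1 - real (card (NTs n i)) * ((1/2) ^ m) ^ 3 / 2 powr (real n * Th)"
proof -
  define X where "X = 2 powr (real n * Th)"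
  define N where "N M = real (N_count n i (kernel_code m n M))" for M
  define Z :: real where "Z = 2 ^ (m * n)"
  define E where "E = real (card (NTs n i)) * ((1/2) ^ m) ^ 3"
  have X0: "X > 0" unfolding X_def by simp
  have sub: "{M\<in>matrices m n. \<not> (N_count n i (kernel_code m n M) = 0 \<or>
            log 2 (real (N_count n i (kernel_code m n M))) / real n \<le> Th)}
         \<subseteq> {M\<in>matrices m n. X \<le> N M}"
  proof (rule subsetI)
    fix M assume "M \<in> {M\<in>matrices m n. \<not> (N_count n i (kernel_code m n M) = 0 \<or>
            log 2 (real (N_count n i (kernel_code m n M))) / real n \<le> Th)}"
    then have MM: "M \<in> matrices m n" and nz: "N_count n i (kernel_code m n M) \<noteq> 0"
      and gt: "\<not> log 2 (real (N_count n i (kernel_code m n M))) / real n \<le> Th" by auto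
    have pos: "N M > 0" using nz unfolding N_def by simp
    have "real n * Th < log 2 (N M)" using gt n unfolding N_def by (simp add: field_simps)
    then have "X < 2 powr (log 2 (N M))" unfolding X_def by simp
    then show "M \<in> {M\<in>matrices m n. X \<le> N M}" using pos MM by simp
  qed
  have "real (card {M\<in>matrices m n. \<not> (N_count n i (kernel_code m n M) = 0 \<or>
            log 2 (real (N_count n i (kernel_code m n M))) / real n \<le> Th)})
      \<le> real (card {M\<in>matrices m n. X \<le> N M})"
    using card_mono[OF _ sub] matrices_finite by simp
  also have "\<dots> \<le> (\<Sum>M\<in>matrices m n. N M) / X"
    using markov_count[OF matrices_finite[of m n] X0, of N] X0 unfolding N_def by (simp add: field_simps)
  also have "\<dots> = Z * E / X" unfolding N_def Z_def E_def using sum_N_real[OF i] by simp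
  finally show ?thesis unfolding X_def[symmetric] using prob_ge[of m n _ "Z * E / X"]
    unfolding Z_def E_def by simp
qed

lemma prob_part2:
  fixes m n i :: nat and \<tau> \<delta> :: real
  assumes i: "i \<ge> 1" and n: "n > 0" and K: "card (NTs n i) > 0"
    and close: "\<bar>log 2 (real (card (NTs n i)) * ((1/2) ^ m) ^ 3) / real n - \<tau>\<bar> + 1 / real n \<le> \<delta>"
  shows "prob_matrix m n (\<lambda>M. N_count n i (kernel_code m n M) > 0 \<and>
            \<bar>log 2 (real (N_count n i (kernel_code m n M))) / real n - \<tau>\<bar> \<le> \<delta>)
        \<ge> 1 - 4 * W ((1/2) ^ m) (card (layer n i)) 3 3 / (real (card (NTs n i)) * ((1/2) ^ m) ^ 6)"
proof -
  define N where "N M = real (N_count n i (kernel_code m n M))" for M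
  define Z :: real where "Z = 2 ^ (m * n)"
  define P :: real where "P = (1/2) ^ m"
  define K where "K = real (card (NTs n i))"
  define w where "w = W P (card (layer n i)) 3 3"
  define E where "E = K * P ^ 3"
  have P0: "P > 0" unfolding P_def by simp
  have K0: "K > 0" using K unfolding K_def by simp
  have E0: "E > 0" unfolding E_def using P0 K0 by simp
  have Z0: "Z > 0" unfolding Z_def by simp
  have good: "N_count n i (kernel_code m n M) > 0 \<and>
            \<bar>log 2 (real (N_count n i (kernel_code m n M))) / real n - \<tau>\<bar> \<le> \<delta>"
    if "\<bar>N M - E\<bar> < E / 2" for M
  proof -
    have lo: "E / 2 < N M" and hi: "N M < 2 * E" using that E0 unfolding abs_less_iff by linarith+
    have Np: "N M > 0" using lo E0 by simp
    have "log 2 (E / 2) < log 2 (N M)" using lo E0 by simp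
    then have l1: "log 2 E - 1 < log 2 (N M)" using E0 by (simp add: log_divide)
    have "log 2 (N M) < log 2 (2 * E)" using hi Np by simp
    then have l2: "log 2 (N M) < log 2 E + 1" using E0 by (simp add: log_mult)
    have "\<bar>log 2 (N M) - log 2 E\<bar> < 1" using l1 l2 by (simp add: abs_less_iff)
    then have "\<bar>log 2 (N M) / real n - log 2 E / real n\<bar> < 1 / real n"
      using n by (simp add: diff_divide_distrib[symmetric] abs_divide divide_strict_right_mono)
    moreover have "\<bar>log 2 E / real n - \<tau>\<bar> + 1 / real n \<le> \<delta>"
      using close unfolding E_def K_def P_def .
    ultimately have "\<bar>log 2 (N M) / real n - \<tau>\<bar> \<le> \<delta>" by linarith
    then show ?thesis using Np unfolding N_def by simp
  qed
  have sub: "{M\<in>matrices m n. \<not> (N_count n i (kernel_code m n M) > 0 \<and>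
            \<bar>log 2 (real (N_count n i (kernel_code m n M))) / real n - \<tau>\<bar> \<le> \<delta>)}
         \<subseteq> {M\<in>matrices m n. E / 2 \<le> \<bar>N M - E\<bar>}"
  proof (rule subsetI)
    fix M assume M: "M \<in> {M\<in>matrices m n. \<not> (N_count n i (kernel_code m n M) > 0 \<and>
            \<bar>log 2 (real (N_count n i (kernel_code m n M))) / real n - \<tau>\<bar> \<le> \<delta>)}"
    then have "\<not> \<bar>N M - E\<bar> < E / 2" using good[of M] by blast
    then show "M \<in> {M\<in>matrices m n. E / 2 \<le> \<bar>N M - E\<bar>}" using M by simp
  qed
  have "real (card {M\<in>matrices m n. \<not> (N_count n i (kernel_code m n M) > 0 \<and>
            \<bar>log 2 (real (N_count n i (kernel_code m n M))) / real n - \<tau>\<bar> \<le> \<delta>)})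
      \<le> real (card {M\<in>matrices m n. E / 2 \<le> \<bar>N M - E\<bar>})"
    using card_mono[OF _ sub] matrices_finite by simp
  also have "\<dots> \<le> (\<Sum>M\<in>matrices m n. (N M - E)^2) / (E / 2)^2"
    using chebyshev_count[OF matrices_finite[of m n], of "E/2" "\<lambda>M. N M - E"] E0 by (simp add: field_simps)
  also have "\<dots> \<le> (Z * K * w) / (E / 2)^2"
    using var_bound[OF i, of n m] E0 unfolding N_def Z_def K_def w_def E_def P_def
    by (intro divide_right_mono) auto
  also have "\<dots> = Z * (4 * w / (K * P ^ 6))"
  proof -
    have e2: "(E / 2)^2 = K^2 * P^6 / 4" unfolding E_def power_divide sq6 by simp
    have "K^2 * P^6 > 0" using K0 P0 by simp
    then show ?thesis unfolding e2 using K0 P0 by (simp add: power2_eq_square field_simps)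
  qed
  finally show ?thesis using prob_ge[of m n _ "Z * (4 * w / (K * P ^ 6))"] Z0
    unfolding Z_def w_def K_def P_def by simp
qed

lemma half_pow: "((1/2::real) ^ m) = 2 powr (- real m)"
  by (simp add: powr_minus powr_realpow power_one_over inverse_eq_divide)

lemma le_powr_iff_log: "x > 0 \<Longrightarrow> (x \<le> 2 powr a) = (log 2 x \<le> a)"
  by (simp add: log_le_iff)

lemma exp_decay: "e > 0 \<Longrightarrow> ((\<lambda>n::nat. C * 2 powr (- (e * real n))) \<longlongrightarrow> 0) at_top"
  by real_asymp

lemma zs_trivial_bound:
  "card (zero_sum_4tuples (layer n i)) \<le> card (NTs n i) + 3 * card (layer n i) ^ 2"
proof -
  let ?L = "layer n i"
  define A1 where "A1 = (\<lambda>(a, b). (a, a, b, b)) ` (?L \<times> ?L)"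
  define A2 where "A2 = (\<lambda>(a, b). (a, b, a, b)) ` (?L \<times> ?L)"
  define A3 where "A3 = (\<lambda>(a, b). (a, b, b, a)) ` (?L \<times> ?L)"
  have sub: "zero_sum_4tuples ?L \<subseteq> NTs n i \<union> A1 \<union> A2 \<union> A3"
  proof
    fix t assume t: "t \<in> zero_sum_4tuples ?L"
    obtain u1 u2 u3 u4 where tt: "t = (u1, u2, u3, u4)" by (metis prod.collapse)
    have L: "u1 \<in> ?L" "u2 \<in> ?L" "u3 \<in> ?L" "u4 \<in> ?L"
      and z: "sdiff (sdiff u1 u2) (sdiff u3 u4) = {}" using t unfolding tt zero_sum_4tuples_def by auto
    have d: "u4 = sdiff u1 (sdiff u2 u3)" by (rule sdiff_zero_solve[OF z])
    show "t \<in> NTs n i \<union> A1 \<union> A2 \<union> A3"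
    proof (cases "u1 \<noteq> u2 \<and> u1 \<noteq> u3 \<and> u1 \<noteq> u4 \<and> u2 \<noteq> u3 \<and> u2 \<noteq> u4 \<and> u3 \<noteq> u4")
      case True then show ?thesis using t unfolding tt NTs_def by auto
    next
      case False
      then have "(u1 = u2 \<and> u3 = u4) \<or> (u1 = u3 \<and> u2 = u4) \<or> (u1 = u4 \<and> u2 = u3)"
        using d by (auto simp: sdiff_def)
      then show ?thesis unfolding tt A1_def A2_def A3_def using L by auto
    qed
  qed
  have fin: "finite (?L \<times> ?L)" using layer_finite by simp
  have c: "card (f ` (?L \<times> ?L)) \<le> card ?L ^ 2" for f :: "nat set \<times> nat set \<Rightarrow> nat set \<times> nat set \<times> nat set \<times> nat set"
    using card_image_le[OF fin, of f] by (simp add: card_cartesian_product power2_eq_square)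
  have "card (zero_sum_4tuples ?L) \<le> card (NTs n i \<union> A1 \<union> A2 \<union> A3)"
    by (rule card_mono[OF _ sub]) (use NTs_finite fin in \<open>auto simp: A1_def A2_def A3_def\<close>)
  also have "\<dots> \<le> card (NTs n i) + card A1 + card A2 + card A3"
    by (meson card_Un_le add_le_mono order_trans le_refl)
  also have "\<dots> \<le> card (NTs n i) + 3 * card ?L ^ 2"
    using c[of "\<lambda>(a, b). (a, a, b, b)"] c[of "\<lambda>(a, b). (a, b, a, b)"] c[of "\<lambda>(a, b). (a, b, b, a)"]
    unfolding A1_def A2_def A3_def by linarith
  finally show ?thesis .
qed

lemma NTs_le: "card (NTs n i) \<le> card (zero_sum_4tuples (layer n i))"
  by (rule card_mono[OF zs_finite NTs_sub])

lemma powr_pow2: "(2 powr x :: real) ^ k = 2 powr (real k * x)"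
proof -
  have "(2 powr x :: real) ^ k = (2 powr x) powr (real k)" by (simp add: powr_realpow)
  also have "\<dots> = 2 powr (x * real k)" by (simp add: powr_powr)
  finally show ?thesis by (simp add: mult.commute)
qed

lemma g2_bound:
  fixes K l P lm h a :: real and n :: nat
  assumes P: "P = 2 powr (- (lm * real n))" and l1: "1 \<le> l" and l2: "l \<le> 2 powr (h * real n)"
    and lh: "lm \<le> h" and lam: "0 \<le> lm" and K: "K \<ge> 2 powr (a * real n) / 2"
  shows "4 * W P l 3 3 / (K * P ^ 6) \<le> 8128 * 2 powr (- ((a - (2 * h + lm)) * real n))"
proof -
  define Q where "Q = 2 powr (lm * real n)"
  define B where "B = 2 powr ((2 * h + lm) * real n)"
  have Q0: "Q \<ge> 1" unfolding Q_def using lam by (intro ge_one_powr_ge_zero) auto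
  have PQ: "P * Q = 1" unfolding P Q_def powr_add[symmetric] by simp
  have P0: "P > 0" unfolding P by simp
  have "2 powr (a * real n) / 2 > 0" by simp
  then have K0: "K > 0" using K by linarith
  have e: "W P l 3 3 / P ^ 6 = 512 * Q ^ 3 + 448 * l * Q ^ 2 + 56 * l ^ 2 * Q"
  proof -
    have "W P l 3 3 = P ^ 6 * (512 * Q ^ 3 + 448 * l * Q ^ 2 + 56 * l ^ 2 * Q)"
      unfolding W33 using PQ by algebra
    then show ?thesis using P0 by simp
  qed
  have b1: "Q ^ 3 \<le> B"
  proof -
    have "Q ^ 3 = 2 powr (3 * (lm * real n))" unfolding Q_def powr_pow2 by simp
    also have "\<dots> \<le> B"
    proof -
      have "(3 * lm) * real n \<le> (2 * h + lm) * real n" using lh by (intro mult_right_mono) auto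
      then show ?thesis unfolding B_def by (intro powr_mono) (auto simp: ac_simps)
    qed
    finally show ?thesis .
  qed
  have b2: "l * Q ^ 2 \<le> B"
  proof -
    have "l * Q ^ 2 \<le> 2 powr (h * real n) * Q ^ 2" using l2 by (simp add: mult_right_mono)
    also have "\<dots> = 2 powr (h * real n + 2 * (lm * real n))" unfolding Q_def powr_pow2 powr_add by simp
    also have "\<dots> \<le> B"
    proof -
      have "h * real n + 2 * (lm * real n) \<le> (2 * h + lm) * real n"
        using lh by (simp add: algebra_simps mult_right_mono)
      then show ?thesis unfolding B_def by (intro powr_mono) auto
    qed
    finally show ?thesis .
  qed
  have b3: "l ^ 2 * Q \<le> B"
  proof -
    have "l ^ 2 \<le> (2 powr (h * real n)) ^ 2" using l1 l2 by (intro power_mono) auto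
    then have "l ^ 2 * Q \<le> (2 powr (h * real n)) ^ 2 * Q" using Q0 by (simp add: mult_right_mono)
    also have "\<dots> = 2 powr (2 * (h * real n) + lm * real n)" unfolding Q_def powr_pow2 powr_add by simp
    also have "\<dots> = B" unfolding B_def by (simp add: algebra_simps)
    finally show ?thesis .
  qed
  have "4 * W P l 3 3 / (K * P ^ 6) = 4 * (W P l 3 3 / P ^ 6) / K" using P0 K0 by (simp add: field_simps)
  also have "\<dots> \<le> 4 * (1016 * B) / K" unfolding e using b1 b2 b3 K0 by (intro divide_right_mono) auto
  also have "\<dots> \<le> 4 * (1016 * B) / (2 powr (a * real n) / 2)"
    using K K0 by (intro divide_left_mono) (auto simp: B_def)
  also have "\<dots> = 8128 * (B / 2 powr (a * real n))" by simp
  also have "B / 2 powr (a * real n) = 2 powr (- ((a - (2 * h + lm)) * real n))"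
    unfolding B_def by (simp add: powr_diff[symmetric] algebra_simps)
  finally show ?thesis .
qed

lemma int_mult_filter_Sg: "int_mult_filter x = inf at_top (principal (Sg x))"
  unfolding int_mult_filter_def Sg_def ..

lemma Tn_pos:
  assumes "0 \<le> \<gamma>" "\<gamma> \<le> 1"
  shows "1 \<le> card (Tn \<gamma> n)"
proof -
  have h1: "\<gamma> * real n \<le> real n" using assms by (intro mult_left_le_one_le) auto
  have h2: "real_of_int \<lfloor>\<gamma> * real n\<rfloor> \<le> \<gamma> * real n" by (rule of_int_floor_le)
  have "real_of_int \<lfloor>\<gamma> * real n\<rfloor> \<le> real n" by (rule order_trans[OF h2 h1])
  then have "real_of_int \<lfloor>\<gamma> * real n\<rfloor> \<le> real_of_int (int n)" by simp
  then have "\<lfloor>\<gamma> * real n\<rfloor> \<le> int n" by (simp only: of_int_le_iff)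
  then have "nat \<lfloor>\<gamma> * real n\<rfloor> \<le> n" by simp
  then show ?thesis unfolding Tn_def by (rule zs_pos)
qed

lemma psi_limit:
  assumes g: "0 < \<gamma>" "\<gamma> \<le> 1" and n0: "n0 \<in> Sg \<gamma>" "n0 > 0"
  obtains L0 where "((\<lambda>n. log 2 (real (card (Tn \<gamma> n))) / real n) \<longlongrightarrow> L0) (int_mult_filter \<gamma>)"
    and "int_mult_filter \<gamma> \<noteq> bot"
    and "\<And>n. n \<in> Sg \<gamma> \<Longrightarrow> n > 0 \<Longrightarrow> log 2 (real (card (Tn \<gamma> n))) / real n \<le> L0"
proof -
  define q where "q = (LEAST n. 0 < n \<and> n \<in> Sg \<gamma>)"
  have qS: "0 < q \<and> q \<in> Sg \<gamma>" unfolding q_def by (rule LeastI[of _ n0]) (use n0 in simp)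
  have qmin: "q \<le> n" if "n \<in> Sg \<gamma>" "0 < n" for n unfolding q_def by (rule Least_le) (use that in simp)
  have Sq: "n \<in> Sg \<gamma> \<longleftrightarrow> q dvd n" for n
    by (rule Sg_char) (use qS qmin g in auto)
  define a where "a k = log 2 (real (card (Tn \<gamma> (k * q))))" for k
  have kqS: "k * q \<in> Sg \<gamma>" for k using Sq by simp
  have pos: "1 \<le> card (Tn \<gamma> n)" for n by (rule Tn_pos) (use g in auto)
  have pos': "0 < card (Tn \<gamma> n)" for n using pos[of n] by simp
  have sup: "a k + a l \<le> a (k + l)" for k l
  proof -
    have fl: "nat \<lfloor>\<gamma> * real ((k + l) * q)\<rfloor> = nat \<lfloor>\<gamma> * real (k * q)\<rfloor> + nat \<lfloor>\<gamma> * real (l * q)\<rfloor>"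
    proof -
      have "real (nat \<lfloor>\<gamma> * real ((k + l) * q)\<rfloor>) = \<gamma> * real ((k + l) * q)" by (rule Sg_floor[OF kqS])
      also have "\<dots> = \<gamma> * real (k * q) + \<gamma> * real (l * q)" by (simp add: algebra_simps)
      also have "\<dots> = real (nat \<lfloor>\<gamma> * real (k * q)\<rfloor>) + real (nat \<lfloor>\<gamma> * real (l * q)\<rfloor>)"
        unfolding Sg_floor[OF kqS[of k]] Sg_floor[OF kqS[of l]] ..
      finally show ?thesis by linarith
    qed
    have "card (Tn \<gamma> (k * q)) * card (Tn \<gamma> (l * q)) \<le> card (Tn \<gamma> ((k + l) * q))"
      unfolding Tn_def fl using zs_superadd[of "k * q" _ "l * q"] by (simp add: add_mult_distrib)
    then have "real (card (Tn \<gamma> (k * q))) * real (card (Tn \<gamma> (l * q))) \<le> real (card (Tn \<gamma> ((k + l) * q)))"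
      unfolding of_nat_mult[symmetric] of_nat_le_iff .
    then have "log 2 (real (card (Tn \<gamma> (k * q))) * real (card (Tn \<gamma> (l * q)))) \<le> log 2 (real (card (Tn \<gamma> ((k + l) * q))))"
      using pos' by (intro log_mono) (auto intro!: mult_pos_pos)
    then show ?thesis unfolding a_def using pos' by (simp add: log_mult)
  qed
  have bnd: "a k \<le> real (4 * q) * real k" for k
  proof -
    have "card (Tn \<gamma> (k * q)) \<le> 2 ^ (4 * (k * q))" unfolding Tn_def by (rule zs_le)
    then have "real (card (Tn \<gamma> (k * q))) \<le> real (2 ^ (4 * (k * q)))" unfolding of_nat_le_iff .
    then have "real (card (Tn \<gamma> (k * q))) \<le> 2 ^ (4 * (k * q))" by simp
    then have "a k \<le> log 2 (2 ^ (4 * (k * q)))" unfolding a_def using pos' by (intro log_mono) auto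
    also have "\<dots> = real (4 * q) * real k" by (simp add: log_nat_power algebra_simps)
    finally show ?thesis .
  qed
  define \<sigma> where "\<sigma> = (SUP k\<in>{1..}. a k / real k)"
  note F = fekete[of a "real (4 * q)", OF sup bnd, folded \<sigma>_def]
  define L0 where "L0 = \<sigma> / real q"
  have qpos: "real q > 0" using qS by simp
  have fn: "log 2 (real (card (Tn \<gamma> n))) / real n = (a k / real k) / real q" if "n = k * q" for n k
    unfolding a_def that by simp
  have up: "log 2 (real (card (Tn \<gamma> n))) / real n \<le> L0" if "n \<in> Sg \<gamma>" "n > 0" for n
  proof -
    have "q dvd n" using that Sq by simp
    then obtain k' where "n = q * k'" by (rule dvdE)
    then have k: "n = k' * q" by simp
    define k where "k = k'"
    note k = k[folded k_def]
    then have "k \<ge> 1" using that by (cases k) auto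
    then have "a k / real k \<le> \<sigma>" by (rule F(1))
    then have "(a k / real k) / real q \<le> \<sigma> / real q" using qpos by (intro divide_right_mono) auto
    then show ?thesis unfolding fn[OF k] L0_def .
  qed
  have lim: "((\<lambda>n. log 2 (real (card (Tn \<gamma> n))) / real n) \<longlongrightarrow> L0) (int_mult_filter \<gamma>)"
  proof (rule tendstoI)
    fix e :: real assume e: "e > 0"
    then have "e * real q > 0" using qpos by simp
    then obtain K where K: "\<And>k. k \<ge> K \<Longrightarrow> dist (a k / real k) \<sigma> < e * real q"
      using F(2)[unfolded LIMSEQ_def] by blast
    show "eventually (\<lambda>n. dist (log 2 (real (card (Tn \<gamma> n))) / real n) L0 < e) (int_mult_filter \<gamma>)"
      unfolding int_mult_filter_Sg eventually_inf_principal eventually_at_top_linorder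
    proof (intro exI allI impI)
      fix n assume n: "n \<ge> K * q" and nS: "n \<in> Sg \<gamma>"
      have "q dvd n" using nS Sq by simp
      then obtain k' where "n = q * k'" by (rule dvdE)
      then have k: "n = k' * q" by simp
      define k where "k = k'"
      note k = k[folded k_def]
      have "k \<ge> K" using n k qpos by simp
      then have "dist (a k / real k) \<sigma> < e * real q" by (rule K)
      then have "\<bar>a k / real k - \<sigma>\<bar> / real q < e" using qpos by (simp add: dist_real_def field_simps)
      moreover have "dist (log 2 (real (card (Tn \<gamma> n))) / real n) L0 = \<bar>a k / real k - \<sigma>\<bar> / real q"
      proof -
        have "dist (log 2 (real (card (Tn \<gamma> n))) / real n) L0 = \<bar>(a k / real k) / real q - \<sigma> / real q\<bar>"
          unfolding fn[OF k] L0_def dist_real_def ..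
        also have "\<dots> = \<bar>(a k / real k - \<sigma>) / real q\<bar>" by (simp only: diff_divide_distrib)
        also have "\<dots> = \<bar>a k / real k - \<sigma>\<bar> / real q" using qpos by (simp add: abs_divide)
        finally show ?thesis .
      qed
      ultimately show "dist (log 2 (real (card (Tn \<gamma> n))) / real n) L0 < e" by simp
    qed
  qed
  have nb: "int_mult_filter \<gamma> \<noteq> bot"
  proof
    assume "int_mult_filter \<gamma> = bot"
    then have "eventually (\<lambda>_. False) (int_mult_filter \<gamma>)" by simp
    then obtain N where N: "\<And>n. n \<ge> N \<Longrightarrow> n \<in> Sg \<gamma> \<Longrightarrow> False"
      unfolding int_mult_filter_Sg eventually_inf_principal eventually_at_top_linorder by blast
    have "N * q \<ge> N" using qS by simp
    then show False using N kqS by blast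
  qed
  show ?thesis using that lim nb up by blast
qed

lemma prob_le1: "prob_matrix m n Q \<le> 1"
proof -
  have "card {M \<in> matrices m n. Q M} \<le> card (matrices m n)"
    by (rule card_mono[OF matrices_finite]) auto
  then show ?thesis unfolding prob_matrix_def
    by (cases "card (matrices m n) = 0") (auto simp: divide_le_eq_1)
qed

lemma card_le_powr:
  assumes "n > 0" "log 2 (real C) / real n \<le> L" "C > 0"
  shows "real C \<le> 2 powr (L * real n)"
proof -
  have "log 2 (real C) \<le> L * real n" using assms by (simp add: field_simps)
  then show ?thesis using assms(3) by (simp add: le_powr_iff_log)
qed

lemma card_ge_powr:
  assumes "n > 0" "L - e < log 2 (real C) / real n" "C > 0"
  shows "2 powr ((L - e) * real n) \<le> real C"
proof -
  have "(L - e) * real n < log 2 (real C)" using assms by (simp add: field_simps)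
  then have "2 powr ((L - e) * real n) < 2 powr (log 2 (real C))" by simp
  then show ?thesis using assms(3) by simp
qed

lemma part1:
  fixes R \<gamma> L0 c h :: real and F :: "nat filter"
  assumes R: "0 < R" "R < 1" and g: "0 < \<gamma>" "\<gamma> < 1"
    and up: "\<And>n. n \<in> Sg \<gamma> \<Longrightarrow> n > 0 \<Longrightarrow> log 2 (real (card (Tn \<gamma> n))) / real n \<le> L0"
    and Fat: "F \<le> at_top" and evS: "eventually (\<lambda>n. n \<in> Sg (1 - R) \<and> n \<in> Sg \<gamma>) F"
    and c: "c > 0" and L0: "L0 = 2 * h + (1 - R) - 2 * c"
  shows "((\<lambda>n. prob_matrix (nat \<lfloor>(1 - R) * real n\<rfloor>) n (\<lambda>M.
                 N_count n (nat \<lfloor>\<gamma> * real n\<rfloor>) (kernel_code (nat \<lfloor>(1 - R) * real n\<rfloor>) n M) = 0 \<or>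
                 log 2 (real (N_count n (nat \<lfloor>\<gamma> * real n\<rfloor>) (kernel_code (nat \<lfloor>(1 - R) * real n\<rfloor>) n M))) / real n
                   \<le> 2 * h - 2 * (1 - R) - c)) \<longlongrightarrow> 1) F"
proof (rule tendsto_sandwich[where f="\<lambda>n. 1 - 2 powr (- (c * real n))" and h="\<lambda>_. 1"])
  define lm where "lm = 1 - R"
  have ev1: "eventually (\<lambda>n. 1 \<le> n) F" using Fat by (rule filter_leD) (rule eventually_ge_at_top)
  show "eventually (\<lambda>n. prob_matrix (nat \<lfloor>(1 - R) * real n\<rfloor>) n (\<lambda>M.
                 N_count n (nat \<lfloor>\<gamma> * real n\<rfloor>) (kernel_code (nat \<lfloor>(1 - R) * real n\<rfloor>) n M) = 0 \<or>
                 log 2 (real (N_count n (nat \<lfloor>\<gamma> * real n\<rfloor>) (kernel_code (nat \<lfloor>(1 - R) * real n\<rfloor>) n M))) / real n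
                   \<le> 2 * h - 2 * (1 - R) - c) \<le> 1) F"
    by (rule always_eventually) (simp add: prob_le1)
  show "eventually (\<lambda>n. 1 - 2 powr (- (c * real n)) \<le> prob_matrix (nat \<lfloor>(1 - R) * real n\<rfloor>) n (\<lambda>M.
                 N_count n (nat \<lfloor>\<gamma> * real n\<rfloor>) (kernel_code (nat \<lfloor>(1 - R) * real n\<rfloor>) n M) = 0 \<or>
                 log 2 (real (N_count n (nat \<lfloor>\<gamma> * real n\<rfloor>) (kernel_code (nat \<lfloor>(1 - R) * real n\<rfloor>) n M))) / real n
                   \<le> 2 * h - 2 * (1 - R) - c)) F"
    using eventually_conj[OF evS ev1]
  proof (rule eventually_mono)
    fix n assume n: "(n \<in> Sg (1 - R) \<and> n \<in> Sg \<gamma>) \<and> 1 \<le> n"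
    define m where "m = nat \<lfloor>(1 - R) * real n\<rfloor>"
    define i where "i = nat \<lfloor>\<gamma> * real n\<rfloor>"
    have n0: "n > 0" using n by simp
    have mr: "real m = lm * real n" unfolding m_def lm_def using Sg_floor n by blast
    have ir: "real i = \<gamma> * real n" unfolding i_def using Sg_floor n by blast
    have i1: "i \<ge> 1" using ir g n0 by (metis less_one mult_pos_pos not_le of_nat_0 of_nat_0_less_iff order_less_irrefl)
    have Tpos: "card (Tn \<gamma> n) > 0" using Tn_pos[of \<gamma> n] g by simp
    have Tle: "real (card (Tn \<gamma> n)) \<le> 2 powr (L0 * real n)"
      using card_le_powr[OF n0 up[OF _ n0] Tpos] n by simp
    have Kle: "real (card (NTs n i)) \<le> 2 powr (L0 * real n)"
      using NTs_le[of n i] Tle unfolding Tn_def i_def[symmetric] by (meson of_nat_le_iff order_trans)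
    define Th where "Th = 2 * h - 2 * (1 - R) - c"
    have P3: "((1/2::real) ^ m) ^ 3 = 2 powr (- (3 * (lm * real n)))"
      unfolding half_pow powr_pow2 mr by simp
    have "real (card (NTs n i)) * ((1/2) ^ m) ^ 3 / 2 powr (real n * Th)
        \<le> 2 powr (L0 * real n) * 2 powr (- (3 * (lm * real n))) / 2 powr (real n * Th)"
      unfolding P3 using Kle by (intro divide_right_mono mult_right_mono) auto
    also have "\<dots> = 2 powr (L0 * real n - 3 * (lm * real n) - real n * Th)"
      by (simp add: powr_add[symmetric] powr_diff[symmetric])
    also have "L0 * real n - 3 * (lm * real n) - real n * Th = - (c * real n)"
      unfolding L0 Th_def lm_def by (simp add: algebra_simps)
    finally have b: "real (card (NTs n i)) * ((1/2) ^ m) ^ 3 / 2 powr (real n * Th) \<le> 2 powr (- (c * real n))" .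
    have "1 - real (card (NTs n i)) * ((1/2) ^ m) ^ 3 / 2 powr (real n * Th)
      \<le> prob_matrix m n (\<lambda>M. N_count n i (kernel_code m n M) = 0 \<or>
            log 2 (real (N_count n i (kernel_code m n M))) / real n \<le> Th)"
      by (rule prob_part1[OF i1 n0])
    then show "1 - 2 powr (- (c * real n)) \<le> prob_matrix (nat \<lfloor>(1 - R) * real n\<rfloor>) n (\<lambda>M.
                 N_count n (nat \<lfloor>\<gamma> * real n\<rfloor>) (kernel_code (nat \<lfloor>(1 - R) * real n\<rfloor>) n M) = 0 \<or>
                 log 2 (real (N_count n (nat \<lfloor>\<gamma> * real n\<rfloor>) (kernel_code (nat \<lfloor>(1 - R) * real n\<rfloor>) n M))) / real n
                   \<le> 2 * h - 2 * (1 - R) - c)"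
      using b unfolding m_def i_def Th_def by linarith
  qed
  show "((\<lambda>n. 1 - 2 powr (- (c * real n))) \<longlongrightarrow> 1) F"
  proof (rule tendsto_mono[OF Fat])
    have "((\<lambda>n::nat. 1 * 2 powr (- (c * real n))) \<longlongrightarrow> 0) at_top" by (rule exp_decay[OF c])
    then show "((\<lambda>n. 1 - 2 powr (- (c * real n))) \<longlongrightarrow> 1) at_top"
      using tendsto_diff[OF tendsto_const[of "1::real"]] by fastforce
  qed
  show "((\<lambda>_. 1) \<longlongrightarrow> (1::real)) F" by simp
qed

lemma powr_tends_top: "e > 0 \<Longrightarrow> filterlim (\<lambda>n::nat. 2 powr (e * real n)) at_top at_top"
  by real_asymp

lemma part2:
  fixes R \<gamma> L0 h \<delta> :: real and F :: "nat filter"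
  assumes R: "0 < R" "R < 1" and g: "0 < \<gamma>" "\<gamma> < 1" and h: "h = bin_entropy \<gamma>" and hl: "1 - R < h"
    and up: "\<And>n. n \<in> Sg \<gamma> \<Longrightarrow> n > 0 \<Longrightarrow> log 2 (real (card (Tn \<gamma> n))) / real n \<le> L0"
    and lim: "((\<lambda>n. log 2 (real (card (Tn \<gamma> n))) / real n) \<longlongrightarrow> L0) F"
    and Fat: "F \<le> at_top" and evS: "eventually (\<lambda>n. n \<in> Sg (1 - R) \<and> n \<in> Sg \<gamma>) F"
    and big: "L0 > 2 * h + (1 - R)" and d: "\<delta> > 0"
  shows "((\<lambda>n. prob_matrix (nat \<lfloor>(1 - R) * real n\<rfloor>) n (\<lambda>M.
                 N_count n (nat \<lfloor>\<gamma> * real n\<rfloor>) (kernel_code (nat \<lfloor>(1 - R) * real n\<rfloor>) n M) > 0 \<and>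
                 \<bar>log 2 (real (N_count n (nat \<lfloor>\<gamma> * real n\<rfloor>) (kernel_code (nat \<lfloor>(1 - R) * real n\<rfloor>) n M))) / real n
                   - (L0 - 3 * (1 - R))\<bar> \<le> \<delta>)) \<longlongrightarrow> 1) F"
proof -
  define lm where "lm = 1 - R"
  define \<eta> where "\<eta> = L0 - 2 * h - lm"
  define \<epsilon> where "\<epsilon> = min (\<delta> / 4) (\<eta> / 2)"
  define a where "a = L0 - \<epsilon>"
  have \<eta>0: "\<eta> > 0" unfolding \<eta>_def lm_def using big by simp
  have \<epsilon>0: "\<epsilon> > 0" unfolding \<epsilon>_def using \<eta>0 d by simp
  have \<epsilon>1: "\<epsilon> \<le> \<delta> / 4" "\<epsilon> \<le> \<eta> / 2" unfolding \<epsilon>_def by auto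
  have ah: "a - 2 * h > 0"
  proof -
    have "\<epsilon> < \<eta>" using \<epsilon>1(2) \<eta>0 by linarith
    moreover have "lm \<ge> 0" unfolding lm_def using R by simp
    ultimately show ?thesis unfolding a_def \<eta>_def by linarith
  qed
  have ae: "a - (2 * h + lm) = \<eta> - \<epsilon>" unfolding a_def \<eta>_def by simp
  have ae0: "\<eta> - \<epsilon> > 0" using \<epsilon>1 \<eta>0 by linarith
  have lm0: "0 \<le> lm" "lm \<le> h" unfolding lm_def using R hl by auto
  define G where "G n = 8128 * 2 powr (- ((\<eta> - \<epsilon>) * real n))" for n :: nat
  have evT: "eventually (\<lambda>n. dist (log 2 (real (card (Tn \<gamma> n))) / real n) L0 < \<epsilon>) F"
    using lim \<epsilon>0 by (rule tendstoD)
  have evB: "eventually (\<lambda>n. 6 \<le> 2 powr ((a - 2 * h) * real n)) F"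
    using Fat by (rule filter_leD) (use powr_tends_top[OF ah] in \<open>simp add: filterlim_at_top\<close>)
  have evN: "eventually (\<lambda>n. nat \<lceil>4 / \<delta>\<rceil> + 1 \<le> n) F"
    using Fat by (rule filter_leD) (rule eventually_ge_at_top)
  let ?p = "\<lambda>n. prob_matrix (nat \<lfloor>(1 - R) * real n\<rfloor>) n (\<lambda>M.
                 N_count n (nat \<lfloor>\<gamma> * real n\<rfloor>) (kernel_code (nat \<lfloor>(1 - R) * real n\<rfloor>) n M) > 0 \<and>
                 \<bar>log 2 (real (N_count n (nat \<lfloor>\<gamma> * real n\<rfloor>) (kernel_code (nat \<lfloor>(1 - R) * real n\<rfloor>) n M))) / real n
                   - (L0 - 3 * (1 - R))\<bar> \<le> \<delta>)"
  show ?thesis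
  proof (rule tendsto_sandwich[where f="\<lambda>n. 1 - G n" and h="\<lambda>_. 1"])
    show "eventually (\<lambda>n. ?p n \<le> 1) F" by (rule always_eventually) (simp add: prob_le1)
    show "((\<lambda>_. 1) \<longlongrightarrow> (1::real)) F" by simp
    show "((\<lambda>n. 1 - G n) \<longlongrightarrow> 1) F"
    proof (rule tendsto_mono[OF Fat])
      have "(G \<longlongrightarrow> 0) at_top" unfolding G_def by (rule exp_decay[OF ae0])
      then show "((\<lambda>n. 1 - G n) \<longlongrightarrow> 1) at_top"
        using tendsto_diff[OF tendsto_const[of "1::real"]] by fastforce
    qed
    show "eventually (\<lambda>n. 1 - G n \<le> ?p n) F"
      using eventually_conj[OF evS eventually_conj[OF evT eventually_conj[OF evB evN]]]
    proof (rule eventually_mono)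
      fix n assume A: "(n \<in> Sg (1 - R) \<and> n \<in> Sg \<gamma>) \<and>
        dist (log 2 (real (card (Tn \<gamma> n))) / real n) L0 < \<epsilon> \<and>
        6 \<le> 2 powr ((a - 2 * h) * real n) \<and> nat \<lceil>4 / \<delta>\<rceil> + 1 \<le> n"
      define m where "m = nat \<lfloor>(1 - R) * real n\<rfloor>"
      define i where "i = nat \<lfloor>\<gamma> * real n\<rfloor>"
      have nd: "4 / \<delta> \<le> real n"
      proof -
        have "real (nat \<lceil>4 / \<delta>\<rceil> + 1) \<le> real n" using A by (simp only: of_nat_le_iff)
        moreover have "4 / \<delta> \<le> real (nat \<lceil>4 / \<delta>\<rceil>)" by linarith
        ultimately show ?thesis by simp
      qed
      have n0: "n > 0" using A by simp
      have rn0: "real n > 0" using n0 by simp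
      have mr: "real m = lm * real n" unfolding m_def lm_def using Sg_floor A by blast
      have ir: "real i = \<gamma> * real n" unfolding i_def using Sg_floor A by blast
      have i1: "i \<ge> 1" using ir g n0
        by (metis less_one mult_pos_pos not_le of_nat_0 of_nat_0_less_iff order_less_irrefl)
      have iln: "i \<le> n"
      proof -
        have "\<gamma> * real n \<le> real n" using g by (intro mult_left_le_one_le) auto
        then show ?thesis using ir by simp
      qed
      define T where "T = card (Tn \<gamma> n)"
      define K where "K = card (NTs n i)"
      define l where "l = card (layer n i)"
      have Tpos: "T > 0" unfolding T_def using Tn_pos[of \<gamma> n] g by simp
      have Tge: "2 powr (a * real n) \<le> real T"
      proof -
        have "L0 - \<epsilon> < log 2 (real T) / real n" using A unfolding T_def dist_real_def by linarith
        then show ?thesis unfolding a_def by (rule card_ge_powr[OF n0 _ Tpos])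
      qed
      have Kle: "real K \<le> 2 powr (L0 * real n)"
      proof -
        have nS: "n \<in> Sg \<gamma>" using A by simp
        have "real T \<le> 2 powr (L0 * real n)" unfolding T_def
          by (rule card_le_powr[OF n0 up[OF nS n0] Tpos[unfolded T_def]])
        moreover have "K \<le> T" using NTs_le[of n i] unfolding K_def T_def Tn_def i_def .
        ultimately show ?thesis by (meson of_nat_le_iff order_trans)
      qed
      have l2: "real l \<le> 2 powr (real n * h)" unfolding l_def h using layer_entropy[OF g ir] .
      have l1: "1 \<le> real l" unfolding l_def card_layer using iln by (simp add: Suc_leI)
      have TK: "real T \<le> real K + 3 * real l ^ 2"
      proof -
        have "T \<le> K + 3 * l ^ 2" using zs_trivial_bound[of n i] unfolding T_def K_def l_def Tn_def i_def[symmetric] .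
        then have "real T \<le> real (K + 3 * l ^ 2)" by (simp only: of_nat_le_iff)
        then show ?thesis by simp
      qed
      have lsq: "real l ^ 2 \<le> 2 powr (2 * h * real n)"
      proof -
        have "real l ^ 2 \<le> (2 powr (real n * h)) ^ 2" using l1 l2 by (intro power_mono) auto
        also have "\<dots> = 2 powr (2 * h * real n)" unfolding powr_pow2 by (simp add: ac_simps)
        finally show ?thesis .
      qed
      have six: "6 * 2 powr (2 * h * real n) \<le> 2 powr (a * real n)"
      proof -
        have "2 powr (a * real n) = 2 powr ((a - 2 * h) * real n) * 2 powr (2 * h * real n)"
          by (simp add: powr_add[symmetric] algebra_simps)
        then show ?thesis using A by (simp add: mult_right_mono)
      qed
      have Kge: "real K \<ge> 2 powr (a * real n) / 2" using Tge TK lsq six by linarith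
      have "2 powr (a * real n) / 2 > 0" by simp
      then have Kpos: "real K > 0" using Kge by linarith
      then have K0: "K > 0" by simp
      have logK1: "log 2 (real K) \<le> L0 * real n" using Kle Kpos by (simp add: le_powr_iff_log[symmetric])
      have logK2: "a * real n - 1 \<le> log 2 (real K)"
      proof -
        have "log 2 (2 powr (a * real n) / 2) \<le> log 2 (real K)" using Kge by (intro log_mono) auto
        moreover have "log 2 (2 powr (a * real n) / 2) = a * real n - 1" by (simp add: log_divide)
        ultimately show ?thesis by simp
      qed
      have P: "((1/2::real) ^ m) = 2 powr (- (lm * real n))" unfolding half_pow mr ..
      have P3: "((1/2::real) ^ m) ^ 3 = 2 powr (- (3 * lm * real n))"
        unfolding P powr_pow2 by (simp add: ac_simps)
      have logE: "log 2 (real K * ((1/2) ^ m) ^ 3) = log 2 (real K) - 3 * lm * real n"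
        unfolding P3 using Kpos by (simp add: log_mult)
      have close: "\<bar>log 2 (real K * ((1/2) ^ m) ^ 3) / real n - (L0 - 3 * (1 - R))\<bar> + 1 / real n \<le> \<delta>"
      proof -
        have e: "log 2 (real K * ((1/2) ^ m) ^ 3) / real n - (L0 - 3 * (1 - R)) = log 2 (real K) / real n - L0"
          unfolding logE lm_def using rn0 by (simp add: field_simps)
        have u: "log 2 (real K) / real n \<le> L0" using logK1 rn0 by (simp add: divide_le_eq)
        have v: "a - 1 / real n \<le> log 2 (real K) / real n"
        proof -
          have "(a * real n - 1) / real n \<le> log 2 (real K) / real n"
            using logK2 rn0 by (intro divide_right_mono) auto
          moreover have "(a * real n - 1) / real n = a - 1 / real n" using rn0 by (simp add: diff_divide_distrib)
          ultimately show ?thesis by simp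
        qed
        have w: "1 / real n \<le> \<delta> / 4"
          using nd d rn0 by (simp add: field_simps)
        have "\<bar>log 2 (real K) / real n - L0\<bar> \<le> \<epsilon> + 1 / real n"
          unfolding abs_le_iff using u v unfolding a_def by linarith
        then show ?thesis unfolding e using w \<epsilon>1 by linarith
      qed
      have pr: "1 - 4 * W ((1/2) ^ m) (card (layer n i)) 3 3 / (real (card (NTs n i)) * ((1/2) ^ m) ^ 6)
        \<le> prob_matrix m n (\<lambda>M. N_count n i (kernel_code m n M) > 0 \<and>
            \<bar>log 2 (real (N_count n i (kernel_code m n M))) / real n - (L0 - 3 * (1 - R))\<bar> \<le> \<delta>)"
        using prob_part2[OF i1 n0 K0[unfolded K_def] close[unfolded K_def]] .
      have gb: "4 * W ((1/2) ^ m) (card (layer n i)) 3 3 / (real (card (NTs n i)) * ((1/2) ^ m) ^ 6) \<le> G n"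
        unfolding G_def ae[symmetric] l_def[symmetric] K_def[symmetric]
        by (rule g2_bound[OF P l1 _ lm0(2) lm0(1) Kge]) (use l2 in \<open>simp add: ac_simps\<close>)
      show "1 - G n \<le> ?p n" using pr gb unfolding m_def i_def by linarith
    qed
  qed
qed

theorem proposition1p5:
  fixes R \<gamma> :: real
  assumes "0 < R" "R < 1" "0 < \<gamma>" "\<gamma> \<le> 1/2" "bin_entropy \<gamma> > 1 - R"
  defines "F \<equiv> inf (int_mult_filter (1 - R)) (int_mult_filter \<gamma>)"
      and "m \<equiv> (\<lambda>n::nat. nat \<lfloor>(1 - R) * real n\<rfloor>)"
      and "i \<equiv> (\<lambda>n::nat. nat \<lfloor>\<gamma> * real n\<rfloor>)"
  shows "(psi4 \<gamma> < 1 - R \<longrightarrow>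
           (\<exists>c>0. ((\<lambda>n. prob_matrix (m n) n (\<lambda>M.
                 N_count n (i n) (kernel_code (m n) n M) = 0 \<or>
                 log 2 (real (N_count n (i n) (kernel_code (m n) n M))) / real n
                   \<le> 2 * bin_entropy \<gamma> - 2 * (1 - R) - c)) \<longlongrightarrow> 1) F))
       \<and> (psi4 \<gamma> > 1 - R \<longrightarrow>
           (\<forall>\<delta>>0. ((\<lambda>n. prob_matrix (m n) n (\<lambda>M.
                 N_count n (i n) (kernel_code (m n) n M) > 0 \<and>
                 \<bar>log 2 (real (N_count n (i n) (kernel_code (m n) n M))) / real n
                   - (psi4 \<gamma> + 2 * bin_entropy \<gamma> - 3 * (1 - R))\<bar> \<le> \<delta>)) \<longlongrightarrow> 1) F))"
proof -
  have R: "0 < R" "R < 1" using assms(1,2) .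
  have g: "0 < \<gamma>" "\<gamma> < 1" using assms(3,4) by auto
  have hl: "1 - R < bin_entropy \<gamma>" using assms(5) .
  have e1: "eventually (\<lambda>n. n \<in> Sg x) (int_mult_filter x)" for x
    unfolding int_mult_filter_Sg eventually_inf_principal by simp
  have Fle1: "F \<le> int_mult_filter (1 - R)" unfolding F_def by simp
  have Fle2: "F \<le> int_mult_filter \<gamma>" unfolding F_def by simp
  have Fat: "F \<le> at_top"
  proof -
    have "int_mult_filter \<gamma> \<le> at_top" unfolding int_mult_filter_Sg by simp
    then show ?thesis using Fle2 by (rule order_trans[rotated])
  qed
  have evS: "eventually (\<lambda>n. n \<in> Sg (1 - R) \<and> n \<in> Sg \<gamma>) F"
    using filter_leD[OF Fle1 e1] filter_leD[OF Fle2 e1] by (rule eventually_conj)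
  show ?thesis
  proof (cases "\<exists>n0. n0 > 0 \<and> n0 \<in> Sg (1 - R) \<and> n0 \<in> Sg \<gamma>")
    case False
    have ev1: "eventually (\<lambda>n. 1 \<le> n) F" using Fat by (rule filter_leD) (rule eventually_ge_at_top)
    have "eventually (\<lambda>n. False) F"
      using eventually_conj[OF evS ev1] by (rule eventually_mono) (use False in auto)
    then have "F = bot" by (simp only: eventually_False)
    then show ?thesis by (auto intro: exI[of _ 1])
  next
    case True
    then obtain n0 where n0: "n0 > 0" "n0 \<in> Sg \<gamma>" by blast
    obtain L0 where lim: "((\<lambda>n. log 2 (real (card (Tn \<gamma> n))) / real n) \<longlongrightarrow> L0) (int_mult_filter \<gamma>)"
      and nb: "int_mult_filter \<gamma> \<noteq> bot"
      and up: "\<And>n. n \<in> Sg \<gamma> \<Longrightarrow> n > 0 \<Longrightarrow> log 2 (real (card (Tn \<gamma> n))) / real n \<le> L0"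
      using psi_limit[OF g(1) _ n0(2) n0(1)] g by auto
    have psi: "psi4 \<gamma> = L0 - 2 * bin_entropy \<gamma>"
      unfolding psi4_def using tendsto_Lim[OF nb lim[unfolded Tn_def]] by simp
    have limF: "((\<lambda>n. log 2 (real (card (Tn \<gamma> n))) / real n) \<longlongrightarrow> L0) F"
      by (rule tendsto_mono[OF Fle2 lim])
    show ?thesis unfolding m_def i_def
    proof (intro conjI impI)
      assume a: "psi4 \<gamma> < 1 - R"
      define c where "c = (2 * bin_entropy \<gamma> + (1 - R) - L0) / 2"
      have c0: "c > 0" unfolding c_def using a psi by simp
      have L0e: "L0 = 2 * bin_entropy \<gamma> + (1 - R) - 2 * c" unfolding c_def by (simp add: field_simps)
      show "\<exists>c>0. ((\<lambda>n. prob_matrix (nat \<lfloor>(1 - R) * real n\<rfloor>) n (\<lambda>M.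
                 N_count n (nat \<lfloor>\<gamma> * real n\<rfloor>) (kernel_code (nat \<lfloor>(1 - R) * real n\<rfloor>) n M) = 0 \<or>
                 log 2 (real (N_count n (nat \<lfloor>\<gamma> * real n\<rfloor>) (kernel_code (nat \<lfloor>(1 - R) * real n\<rfloor>) n M))) / real n
                   \<le> 2 * bin_entropy \<gamma> - 2 * (1 - R) - c)) \<longlongrightarrow> 1) F"
        using part1[OF R g up Fat evS c0 L0e] c0 by blast
    next
      assume a: "psi4 \<gamma> > 1 - R"
      have big: "L0 > 2 * bin_entropy \<gamma> + (1 - R)" using a psi by simp
      have tgt: "psi4 \<gamma> + 2 * bin_entropy \<gamma> - 3 * (1 - R) = L0 - 3 * (1 - R)" using psi by simp
      show "\<forall>\<delta>>0. ((\<lambda>n. prob_matrix (nat \<lfloor>(1 - R) * real n\<rfloor>) n (\<lambda>M.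
                 N_count n (nat \<lfloor>\<gamma> * real n\<rfloor>) (kernel_code (nat \<lfloor>(1 - R) * real n\<rfloor>) n M) > 0 \<and>
                 \<bar>log 2 (real (N_count n (nat \<lfloor>\<gamma> * real n\<rfloor>) (kernel_code (nat \<lfloor>(1 - R) * real n\<rfloor>) n M))) / real n
                   - (psi4 \<gamma> + 2 * bin_entropy \<gamma> - 3 * (1 - R))\<bar> \<le> \<delta>)) \<longlongrightarrow> 1) F"
        unfolding tgt using part2[OF R g refl hl up limF Fat evS big] by blast
    qed
  qed
qed

end
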